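(* Let $W=\langle \mathcal{D},\mathcal{N},\mathrm{wr},\mathrm{gd}\rangle$ be a (1-safe) DAW-net and let $\mathit{RG}_W=(T,\overline{S},\overline{s}_0,\overline{\delta})$ be its reachability graph. Let $\mathrm{bc}(W)$ be the $\mathcal{BC}$ action description encoding $W$ and $\mathit{TS}_{\mathrm{bc}(W)}$ the transition system induced by $\mathrm{bc}(W)$ (all as defined in the context). Then $\mathit{TS}_{\mathrm{bc}(W)}$ and $\mathit{RG}_W$ are trace equivalent.
   Context: **Data model and guards.** A data model is $\mathcal{D}=(\mathcal{V},\Delta,\mathrm{dm},\mathrm{ord})$: $\mathcal{V}$ is a set of variables; $\Delta=\{\Delta_1,\dots,\Delta_n\}$ is a set of (not necessarily disjoint) domains; $\mathrm{dm}:\mathcal{V}\to\Delta$ is total and surjective and assigns to each variable its finite domain; $\mathrm{ord}$ is a partial function which, for a domain $\Delta_i$ on which it is defined, returns a partial order $\le_{\Delta_i}\subseteq\Delta_i\times\Delta_i$. An assignment is a partial function $\eta$ on $\mathcal{V}$ with $\eta(v)\in\mathrm{dm}(v)$ whenever $\eta(v)$ is defined. Guards are given by the grammar $\Phi ::= \mathit{true}\mid \mathrm{def}(v)\mid t_1=t_2\mid t_1\le t_2\mid \neg\Phi\mid \Phi\wedge\Phi$, where $v\in\mathcal{V}$ and $t_1,t_2\in\mathcal{V}\cup\bigcup_i\Delta_i$. Write $t[\eta]$ for $\eta(t)$ if $t$ is a variable on which $\eta$ is defined, and $t$ otherwise. Then $\mathcal{D},\eta\models\mathit{true}$; $\mathcal{D},\eta\models\mathrm{def}(v)$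 iff $\eta(v)$ is defined; $\mathcal{D},\eta\models t_1=t_2$ iff $t_1[\eta],t_2[\eta]\notin\mathcal{V}$ and $t_1[\eta]=t_2[\eta]$; $\mathcal{D},\eta\models t_1\le t_2$ iff $t_1[\eta],t_2[\eta]\in\Delta_i$ for some $i$ with $\mathrm{ord}(\Delta_i)$ defined and $t_1[\eta]\le_{\Delta_i}t_2[\eta]$; negation and conjunction are classical. **DAW-nets.** A Petri net is $\mathcal{N}=(P,T,F)$ with $F\subseteq(P\times T)\cup(T\times P)$; ${}^\bullet t=\{p\mid (p,t)\in F\}$, $t^\bullet=\{p\mid (t,p)\in F\}$; a marking is $M:P\to\mathbb{N}$. $\mathcal{N}$ is a workflow net with a distinguished place $\mathit{start}$ (no incoming arcs) and a distinguished place $\mathit{sink}$. A DAW-net is $W=\langle\mathcal{D},\mathcal{N},\mathrm{wr},\mathrm{gd}\rangle$ where $\mathrm{wr}$ maps each $t\in T$ to a partial function $\mathrm{wr}(t)$ from $\mathcal{V}$ with $\mathrm{wr}(t)(v)\subseteq\mathrm{dm}(v)$, and $\mathrm{gd}$ maps each $t$ to a guard. A state is a pair $(M,\eta)$. A firing $(M,\eta)\xrightarrow{t}(M',\eta')$ is valid iff: $\{p\mid M(p)>0\}\supseteq{}^\bullet t$; $\mathcal{D},\eta\models\mathrm{gd}(t)$; $M'(p)=M(p)-1$ if $p\in{}^\bullet t\setminus t^\bullet$, $M'(p)=M(p)+1$ if $p\in t^\bullet\setminus{}^\bullet t$, $M'(p)=M(p)$ otherwise; $\mathrm{dom}(\eta')=\mathrm{dom}(\eta)\cup\{v\mid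 \mathrm{wr}(t)(v)\neq\emptyset\}\setminus\{v\mid\mathrm{wr}(t)(v)=\emptyset\}$ and for $v\in\mathrm{dom}(\eta')$, $\eta'(v)\in\mathrm{wr}(t)(v)$ if $v\in\mathrm{dom}(\mathrm{wr}(t))$ and $\eta'(v)=\eta(v)$ otherwise. The initial state is $(M_s,\eta_s)$ with $M_s(\mathit{start})=1$, $M_s(p)=0$ for other $p$, and $\eta_s$ empty. Standing assumption: $W$ is 1-safe (in every state reachable from the initial state each place holds at most one token). $\mathcal{V}'$ is the finite set of variables appearing in $W$, and $\mathrm{adm}(v)=\bigcup_{t\in T}\mathrm{wr}(t)(v)$ is the active domain of $v$. **Reachability graph.** $\mathit{RG}_W=(T,\overline{S},\overline{s}_0,\overline{\delta})$ with $\overline{s}_0=(M_s,\eta_s)$, where $\overline{S}$ and $\overline{\delta}\subseteq\overline{S}\times T\times\overline{S}$ are the least sets such that $\overline{s}_0\in\overline{S}$ and, if $(M,\eta)\in\overline{S}$ and $(M,\eta)\xrightarrow{t}(M',\eta')$ is valid, then $(M',\eta')\in\overline{S}$ and $((M,\eta),t,(M',\eta'))\in\overline{\delta}$. **Trace equivalence.** A path of a labelled transition system is a sequence $s_0\xrightarrow{l_1}s_1\cdots\xrightarrow{l_n}s_n$ ($n\ge0$) starting in an initial state and following its transitions. $\mathit{RG}$ and a transition system $\mathit{TS}$ are trace equivalent iff there is an injective function $\mathrm{enc}$ from the states and transitions of $\mathit{RG}$ to the states and transition labels of $\mathit{TS}$ such that (1) for every path $s_0\xrightarrow{t_1}\cdots\xrightarrow{t_n}s_n$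 of $\mathit{RG}$, $\mathrm{enc}(s_0)\xrightarrow{\mathrm{enc}(t_1)}\cdots\xrightarrow{\mathrm{enc}(t_n)}\mathrm{enc}(s_n)$ is a path of $\mathit{TS}$; and (2) for every path $s'_0\xrightarrow{t'_1}\cdots\xrightarrow{t'_n}s'_n$ of $\mathit{TS}$ there is a path $s_0\xrightarrow{t_1}\cdots\xrightarrow{t_n}s_n$ of $\mathit{RG}$ with $\mathrm{enc}(s_i)=s'_i$ for $0\le i\le n$ and $\mathrm{enc}(t_i)=t'_i$ for $1\le i\le n$. **The action language $\mathcal{BC}$.** A description $B$ has fluent constants, each with a finite domain of size $\ge 2$ (Boolean fluents have domain $\{\mathrm{true},\mathrm{false}\}$), and action constants; an atom is $f=v$ with $v$ in the domain of $f$. Dynamic laws are "$A_0$ after $A'_1,\dots,A'_n$ ifcons $A_{n+1},\dots,A_m$" ($A_0,A_{n+1},\dots,A_m$ atoms or $A_0=\mathrm{false}$; $A'_j$ atoms or action constants), static laws "$A_0$ if $A_1,\dots,A_n$ ifcons $A_{n+1},\dots,A_m$", and "initially $A$". For $\ell\ge0$, $P_\ell(B)$ is the disjunctive logic program with classical negation $\neg$ and default negation $\sim$ over atoms $i{:}A$ containing: for each static law and $0\le i\le\ell$, $i{:}A_0\leftarrow i{:}A_1,\dots,i{:}A_n,\sim\neg(i{:}A_{n+1}),\dots,\sim\neg(i{:}A_m)$; for each dynamic law and $0\le i<\ell$, $i{+}1{:}A_0\leftarrow i{:}A'_1,\dots,i{:}A'_n,\sim\neg(i{+}1{:}A_{n+1}),\dots,\sim\neg(i{+}1{:}A_m)$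 (a constraint when $A_0=\mathrm{false}$); for each "initially $f=v$", the fact $0{:}f=v$; $0{:}f=v\vee\neg(0{:}f=v)$ for each fluent $f$ and value $v$; $i{:}a\vee\neg(i{:}a)$ for each action constant $a$ and $i<\ell$; and for each fluent $f$ and $i\le\ell$, $\leftarrow\sim(i{:}f=v_1),\dots,\sim(i{:}f=v_k)$ (where $v_1,\dots,v_k$ is its domain) and $\neg(i{:}f=v)\leftarrow i{:}f=w$ for $v\neq w$. For a stable model (answer set) $X$ of $P_\ell(B)$ let $\sigma_i(X)=\{f\mapsto o\mid (i{:}f=o)\in X\}$. The transition system $\mathit{TS}_{B}=(\mathcal{A},S,S_0,\delta)$ ($\mathcal{A}$ the action constants, transitions labelled by subsets of $\mathcal{A}$) has $S_0=\{\sigma_0(X)\mid X$ a stable model of $P_0(B)\}$, and $S,\delta$ are the least sets with $S_0\subseteq S$ such that whenever $X$ is a stable model of $P_{\ell+1}(B)$ for some $\ell\ge0$ with $\sigma_\ell(X)\in S$, then $\sigma_{\ell+1}(X)\in S$ and $(\sigma_\ell(X),\{a\mid (\ell{:}a)\in X\},\sigma_{\ell+1}(X))\in\delta$. **The encoding $\mathrm{bc}(W)$.** Fluents: for each $v\in\mathcal{V}'$ a fluent $v$ with domain $\mathrm{adm}(v)\cup\{\mathrm{null}\}$; for each $p\in P$ a Boolean fluent $p$; a Boolean fluent $\mathit{trans}$. Action constants: the transitions $t\in T$. Laws: "$v=o$ after $v=o$ ifcons $v=o$" for $v\in\mathcal{V}'$, $o\in\mathrm{adm}(v)\cup\{\mathrm{null}\}$;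 "$p=o$ after $p=o$ ifcons $p=o$" for $p\in P$, $o\in\{\mathrm{true},\mathrm{false}\}$; for each $t\in T$: "$p=\mathrm{false}$ after $t$" for $p\in{}^\bullet t\setminus t^\bullet$; "$p=\mathrm{true}$ after $t$" for $p\in t^\bullet\setminus{}^\bullet t$; "$v=d$ after $t$ ifcons $v=d$" for $d\in\mathrm{wr}(t)(v)$; "$v=\mathrm{null}$ after $t$" for $v$ with $\mathrm{wr}(t)(v)=\emptyset$; "false after $t$ ifcons $v=d$" for $v$ with $\mathrm{wr}(t)(v)\neq\emptyset$ and $d\in\{\mathrm{null}\}\cup\mathrm{adm}(v)\setminus\mathrm{wr}(t)(v)$; "false after $t,s$" for $t\neq s$; "false after $t,p=\mathrm{false}$" for $p\in{}^\bullet t$; "$\mathit{trans}=\mathrm{true}$ after $t$"; "initially $\mathit{start}=\mathrm{true}$", "initially $p=\mathrm{false}$" for $p\neq\mathit{start}$, "initially $v=\mathrm{null}$" for $v\in\mathcal{V}'$, "initially $\mathit{trans}=\mathrm{true}$". Guards: a DNF characterisation of a guard $\Phi$ is a formula $\bigvee_{i=1}^k t^i_1\wedge\dots\wedge t^i_{\ell_i}$ equivalent to $\Phi$ over the data model, each term $t^i_j$ being of the form $v=o$ or $\neg\mathrm{def}(v)$; its translation replaces $v=o$ by the atom $v=o$ and $\neg\mathrm{def}(v)$ by $v=\mathrm{null}$ (write $[\![\cdot]\!]$). For each $t$ with $\mathrm{gd}(t)\not\equiv\mathit{true}$, taking such a characterisation of $\neg\mathrm{gd}(t)$, $\mathrm{bc}(W)$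 contains "false after $t,[\![t^i_1]\!],\dots,[\![t^i_{\ell_i}]\!]$" for each $i=1,\dots,k$. *)

theory Defs
  imports Main
begin

record ('v, 'd) data_model =
  dvars :: "'v set"
  ddoms :: "'d set set"
  ddm   :: "'v \<Rightarrow> 'd set"
  dord  :: "'d set \<Rightarrow> ('d \<times> 'd) set option"

definition wf_data_model :: "('v, 'd) data_model \<Rightarrow> bool" where
  "wf_data_model D \<longleftrightarrow>
     finite (dvars D) \<and> finite (ddoms D) \<and>
     (\<forall>v \<in> dvars D. ddm D v \<in> ddoms D \<and> finite (ddm D v)) \<and>
     (\<forall>Di \<in> ddoms D. \<exists>v \<in> dvars D. ddm D v = Di) \<and>
     (\<forall>Di \<in> ddoms D. \<forall>r. dord D Di = Some r \<longrightarrow> r \<subseteq> Di \<times> Di \<and> partial_order_on Di r)"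

definition assignment :: "('v, 'd) data_model \<Rightarrow> ('v \<rightharpoonup> 'd) \<Rightarrow> bool" where
  "assignment D \<eta> \<longleftrightarrow> dom \<eta> \<subseteq> dvars D \<and> (\<forall>v d. \<eta> v = Some d \<longrightarrow> d \<in> ddm D v)"

datatype ('v, 'd) gterm = GVar 'v | GConst 'd

datatype ('v, 'd) guard =
    GTrue
  | GDef 'v
  | GEq "('v, 'd) gterm" "('v, 'd) gterm"
  | GLe "('v, 'd) gterm" "('v, 'd) gterm"
  | GNot "('v, 'd) guard"
  | GAnd "('v, 'd) guard" "('v, 'd) guard"

fun teval :: "('v \<rightharpoonup> 'd) \<Rightarrow> ('v, 'd) gterm \<Rightarrow> ('v, 'd) gterm" where
  "teval \<eta> (GVar v) = (case \<eta> v of Some d \<Rightarrow> GConst d | None \<Rightarrow> GVar v)"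
| "teval \<eta> (GConst d) = GConst d"

fun holds :: "('v, 'd) data_model \<Rightarrow> ('v \<rightharpoonup> 'd) \<Rightarrow> ('v, 'd) guard \<Rightarrow> bool" where
  "holds D \<eta> GTrue = True"
| "holds D \<eta> (GDef v) = (\<eta> v \<noteq> None)"
| "holds D \<eta> (GEq t1 t2) =
     (\<exists>c1 c2. teval \<eta> t1 = GConst c1 \<and> teval \<eta> t2 = GConst c2 \<and> c1 = c2)"
| "holds D \<eta> (GLe t1 t2) =
     (\<exists>c1 c2 Di r. teval \<eta> t1 = GConst c1 \<and> teval \<eta> t2 = GConst c2 \<and>
        Di \<in> ddoms D \<and> dord D Di = Some r \<and> c1 \<in> Di \<and> c2 \<in> Di \<and> (c1, c2) \<in> r)"
| "holds D \<eta> (GNot g) = (\<not> holds D \<eta> g)"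
| "holds D \<eta> (GAnd g1 g2) = (holds D \<eta> g1 \<and> holds D \<eta> g2)"

fun gterm_vars :: "('v, 'd) gterm \<Rightarrow> 'v set" where
  "gterm_vars (GVar v) = {v}"
| "gterm_vars (GConst d) = {}"

fun gterm_consts :: "('v, 'd) gterm \<Rightarrow> 'd set" where
  "gterm_consts (GVar v) = {}"
| "gterm_consts (GConst d) = {d}"

fun guard_vars :: "('v, 'd) guard \<Rightarrow> 'v set" where
  "guard_vars GTrue = {}"
| "guard_vars (GDef v) = {v}"
| "guard_vars (GEq t1 t2) = gterm_vars t1 \<union> gterm_vars t2"
| "guard_vars (GLe t1 t2) = gterm_vars t1 \<union> gterm_vars t2"
| "guard_vars (GNot g) = guard_vars g"
| "guard_vars (GAnd g1 g2) = guard_vars g1 \<union> guard_vars g2"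

fun guard_consts :: "('v, 'd) guard \<Rightarrow> 'd set" where
  "guard_consts GTrue = {}"
| "guard_consts (GDef v) = {}"
| "guard_consts (GEq t1 t2) = gterm_consts t1 \<union> gterm_consts t2"
| "guard_consts (GLe t1 t2) = gterm_consts t1 \<union> gterm_consts t2"
| "guard_consts (GNot g) = guard_consts g"
| "guard_consts (GAnd g1 g2) = guard_consts g1 \<union> guard_consts g2"

definition guard_valid :: "('v, 'd) data_model \<Rightarrow> ('v, 'd) guard \<Rightarrow> bool" where
  "guard_valid D g \<longleftrightarrow> (\<forall>\<eta>. assignment D \<eta> \<longrightarrow> holds D \<eta> g)"

record ('v, 'd, 'p, 't) dawnet =
  dmodel :: "('v, 'd) data_model"
  places :: "'p set"
  transs :: "'t set"
  arcs_pt :: "('p \<times> 't) set"     (* the part of F in P x T *)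
  arcs_tp :: "('t \<times> 'p) set"     (* the part of F in T x P *)
  pstart :: 'p
  psink :: 'p
  wr :: "'t \<Rightarrow> 'v \<Rightarrow> 'd set option"
  gd :: "'t \<Rightarrow> ('v, 'd) guard"

definition preset :: "('v, 'd, 'p, 't) dawnet \<Rightarrow> 't \<Rightarrow> 'p set" where
  "preset W t = {p. (p, t) \<in> arcs_pt W}"

definition postset :: "('v, 'd, 'p, 't) dawnet \<Rightarrow> 't \<Rightarrow> 'p set" where
  "postset W t = {p. (t, p) \<in> arcs_tp W}"

definition wf_dawnet :: "('v, 'd, 'p, 't) dawnet \<Rightarrow> bool" where
  "wf_dawnet W \<longleftrightarrow>
     wf_data_model (dmodel W) \<and>
     finite (places W) \<and> finite (transs W) \<and>
     arcs_pt W \<subseteq> places W \<times> transs W \<and> arcs_tp W \<subseteq> transs W \<times> places W \<and>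
     pstart W \<in> places W \<and> psink W \<in> places W \<and>
     (\<forall>t. (t, pstart W) \<notin> arcs_tp W) \<and>
     (\<forall>t \<in> transs W. dom (wr W t) \<subseteq> dvars (dmodel W) \<and>
        (\<forall>v S. wr W t v = Some S \<longrightarrow> S \<subseteq> ddm (dmodel W) v)) \<and>
     (\<forall>t \<in> transs W. guard_vars (gd W t) \<subseteq> dvars (dmodel W) \<and>
        guard_consts (gd W t) \<subseteq> \<Union> (ddoms (dmodel W)))"

type_synonym ('v, 'd, 'p) dstate = "('p \<Rightarrow> nat) \<times> ('v \<rightharpoonup> 'd)"

definition valid_firing ::
  "('v, 'd, 'p, 't) dawnet \<Rightarrow> ('v, 'd, 'p) dstate \<Rightarrow> 't \<Rightarrow> ('v, 'd, 'p) dstate \<Rightarrow> bool" where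
  "valid_firing W s t s' \<longleftrightarrow>
     (case s of (M, \<eta>) \<Rightarrow> case s' of (M', \<eta>') \<Rightarrow>
       t \<in> transs W \<and>
       preset W t \<subseteq> {p. M p > 0} \<and>
       holds (dmodel W) \<eta> (gd W t) \<and>
       (\<forall>p. M' p = (if p \<in> preset W t - postset W t then M p - 1
                    else if p \<in> postset W t - preset W t then M p + 1
                    else M p)) \<and>
       dom \<eta>' = (dom \<eta> \<union> {v. \<exists>S. wr W t v = Some S \<and> S \<noteq> {}}) - {v. wr W t v = Some {}} \<and>
       (\<forall>v \<in> dom \<eta>'. (v \<in> dom (wr W t) \<longrightarrow> the (\<eta>' v) \<in> the (wr W t v)) \<and>
                      (v \<notin> dom (wr W t) \<longrightarrow> \<eta>' v = \<eta> v)))"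

definition init_marking :: "('v, 'd, 'p, 't) dawnet \<Rightarrow> 'p \<Rightarrow> nat" where
  "init_marking W = (\<lambda>p. if p = pstart W then 1 else 0)"

definition rg_init :: "('v, 'd, 'p, 't) dawnet \<Rightarrow> ('v, 'd, 'p) dstate" where
  "rg_init W = (init_marking W, Map.empty)"

inductive_set rg_states :: "('v, 'd, 'p, 't) dawnet \<Rightarrow> ('v, 'd, 'p) dstate set"
  for W where
  rg_init_in: "rg_init W \<in> rg_states W"
| rg_step: "s \<in> rg_states W \<Longrightarrow> valid_firing W s t s' \<Longrightarrow> s' \<in> rg_states W"

definition rg_delta :: "('v, 'd, 'p, 't) dawnet \<Rightarrow> (('v, 'd, 'p) dstate \<times> 't \<times> ('v, 'd, 'p) dstate) set" where
  "rg_delta W = {(s, t, s'). s \<in> rg_states W \<and> valid_firing W s t s'}"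

definition one_safe :: "('v, 'd, 'p, 't) dawnet \<Rightarrow> bool" where
  "one_safe W \<longleftrightarrow> (\<forall>s \<in> rg_states W. \<forall>p \<in> places W. fst s p \<le> 1)"

definition Vprime :: "('v, 'd, 'p, 't) dawnet \<Rightarrow> 'v set" where
  "Vprime W = (\<Union>t \<in> transs W. dom (wr W t) \<union> guard_vars (gd W t))"

definition adm :: "('v, 'd, 'p, 't) dawnet \<Rightarrow> 'v \<Rightarrow> 'd set" where
  "adm W v = (\<Union>t \<in> transs W. case wr W t v of None \<Rightarrow> {} | Some S \<Rightarrow> S)"

fun lts_run :: "('s \<times> 'l \<times> 's) set \<Rightarrow> 's \<Rightarrow> ('l \<times> 's) list \<Rightarrow> bool" where
  "lts_run \<delta> s [] = True"
| "lts_run \<delta> s ((l, s') # xs) = ((s, l, s') \<in> \<delta> \<and> lts_run \<delta> s' xs)"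

text \<open>A path s0 -l1-> s1 ... -ln-> sn, given by s0 and the list [(l1,s1),...,(ln,sn)].\<close>
definition lts_path :: "'s set \<Rightarrow> ('s \<times> 'l \<times> 's) set \<Rightarrow> 's \<Rightarrow> ('l \<times> 's) list \<Rightarrow> bool" where
  "lts_path I \<delta> s0 xs \<longleftrightarrow> s0 \<in> I \<and> lts_run \<delta> s0 xs"

definition trace_equivalent ::
  "'s1 set \<Rightarrow> 's1 set \<Rightarrow> 'l1 set \<Rightarrow> ('s1 \<times> 'l1 \<times> 's1) set \<Rightarrow>
   's2 set \<Rightarrow> ('s2 \<times> 'l2 \<times> 's2) set \<Rightarrow> bool" where
  "trace_equivalent I1 S1 L1 \<delta>1 I2 \<delta>2 \<longleftrightarrow>
     (\<exists>encS :: 's1 \<Rightarrow> 's2. \<exists>encL :: 'l1 \<Rightarrow> 'l2.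
        inj_on encS S1 \<and> inj_on encL L1 \<and>
        (\<forall>s0 xs. lts_path I1 \<delta>1 s0 xs \<longrightarrow>
            lts_path I2 \<delta>2 (encS s0) (map (\<lambda>(l, s). (encL l, encS s)) xs)) \<and>
        (\<forall>s0' ys. lts_path I2 \<delta>2 s0' ys \<longrightarrow>
            (\<exists>s0 xs. lts_path I1 \<delta>1 s0 xs \<and> encS s0 = s0' \<and>
                     map (\<lambda>(l, s). (encL l, encS s)) xs = ys)))"

section \<open>The action language BC\<close>

type_synonym ('f, 'o) bc_atom = "'f \<times> 'o"
text \<open>Dynamic law: (head (None = false), after-part (atoms or action constants), ifcons-part).\<close>
type_synonym ('f, 'o, 'a) dyn_law = "('f \<times> 'o) option \<times> (('f \<times> 'o) + 'a) set \<times> ('f \<times> 'o) set"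
text \<open>Static law: (head (None = false), if-part, ifcons-part).\<close>
type_synonym ('f, 'o) stat_law = "('f \<times> 'o) option \<times> ('f \<times> 'o) set \<times> ('f \<times> 'o) set"

record ('f, 'o, 'a) bc_desc =
  bfluents :: "'f set"
  bdom :: "'f \<Rightarrow> 'o set"
  bactions :: "'a set"
  bdyn :: "('f, 'o, 'a) dyn_law set"
  bstat :: "('f, 'o) stat_law set"
  binit :: "('f \<times> 'o) set"

datatype ('f, 'o, 'a) patom = FAt nat 'f 'o | AAt nat 'a
datatype 'x lit = Pos 'x | Neg 'x

text \<open>A rule (H, B+, B~): disjunction of H <- conjunction of B+, default negation of each element of B~.\<close>
type_synonym 'x rule = "'x lit set \<times> 'x lit set \<times> 'x lit set"

definition consistent :: "'x lit set \<Rightarrow> bool" where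
  "consistent X \<longleftrightarrow> \<not> (\<exists>a. Pos a \<in> X \<and> Neg a \<in> X)"

definition reduct :: "'x rule set \<Rightarrow> 'x lit set \<Rightarrow> ('x lit set \<times> 'x lit set) set" where
  "reduct \<Pi> X = {(h, b). \<exists>n. (h, b, n) \<in> \<Pi> \<and> n \<inter> X = {}}"

definition closed_under :: "('x lit set \<times> 'x lit set) set \<Rightarrow> 'x lit set \<Rightarrow> bool" where
  "closed_under R Y \<longleftrightarrow> (\<forall>(h, b) \<in> R. b \<subseteq> Y \<longrightarrow> h \<inter> Y \<noteq> {})"

text \<open>(Consistent) answer sets in the sense of Gelfond and Lifschitz.\<close>
definition stable_model :: "'x rule set \<Rightarrow> 'x lit set \<Rightarrow> bool" where
  "stable_model \<Pi> X \<longleftrightarrow> consistent X \<and> closed_under (reduct \<Pi> X) X \<and>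
     (\<forall>Y. Y \<subset> X \<longrightarrow> \<not> closed_under (reduct \<Pi> X) Y)"

fun head_lits :: "nat \<Rightarrow> ('f \<times> 'o) option \<Rightarrow> ('f, 'o, 'a) patom lit set" where
  "head_lits i None = {}"
| "head_lits i (Some (f, w0)) = {Pos (FAt i f w0)}"

fun after_lit :: "nat \<Rightarrow> (('f \<times> 'o) + 'a) \<Rightarrow> ('f, 'o, 'a) patom lit" where
  "after_lit i (Inl (f, w0)) = Pos (FAt i f w0)"
| "after_lit i (Inr a) = Pos (AAt i a)"

definition pos_at :: "nat \<Rightarrow> ('f \<times> 'o) set \<Rightarrow> ('f, 'o, 'a) patom lit set" where
  "pos_at i A = (\<lambda>(f, w0). Pos (FAt i f w0)) ` A"

definition neg_at :: "nat \<Rightarrow> ('f \<times> 'o) set \<Rightarrow> ('f, 'o, 'a) patom lit set" where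
  "neg_at i A = (\<lambda>(f, w0). Neg (FAt i f w0)) ` A"

definition bc_prog :: "('f, 'o, 'a) bc_desc \<Rightarrow> nat \<Rightarrow> ('f, 'o, 'a) patom rule set" where
  "bc_prog B l =
     {(head_lits i h, pos_at i A, neg_at i C) | h A C i. (h, A, C) \<in> bstat B \<and> i \<le> l}
   \<union> {(head_lits (Suc i) h, after_lit i ` A, neg_at (Suc i) C) | h A C i.
        (h, A, C) \<in> bdyn B \<and> i < l}
   \<union> {({Pos (FAt 0 f w0)}, {}, {}) | f w0. (f, w0) \<in> binit B}
   \<union> {({Pos (FAt 0 f w0), Neg (FAt 0 f w0)}, {}, {}) | f w0. f \<in> bfluents B \<and> w0 \<in> bdom B f}
   \<union> {({Pos (AAt i a), Neg (AAt i a)}, {}, {}) | a i. a \<in> bactions B \<and> i < l}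
   \<union> {({}, {}, {Pos (FAt i f w0) | w0. w0 \<in> bdom B f}) | f i. f \<in> bfluents B \<and> i \<le> l}
   \<union> {({Neg (FAt i f w0)}, {Pos (FAt i f w)}, {}) | f w0 w i.
        f \<in> bfluents B \<and> w0 \<in> bdom B f \<and> w \<in> bdom B f \<and> w0 \<noteq> w \<and> i \<le> l}"

definition sigma :: "nat \<Rightarrow> ('f, 'o, 'a) patom lit set \<Rightarrow> ('f \<times> 'o) set" where
  "sigma i X = {(f, w0). Pos (FAt i f w0) \<in> X}"

definition ts_init :: "('f, 'o, 'a) bc_desc \<Rightarrow> ('f \<times> 'o) set set" where
  "ts_init B = {sigma 0 X | X. stable_model (bc_prog B 0) X}"

inductive_set ts_states :: "('f, 'o, 'a) bc_desc \<Rightarrow> ('f \<times> 'o) set set"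
  for B where
  ts_init_in: "stable_model (bc_prog B 0) X \<Longrightarrow> sigma 0 X \<in> ts_states B"
| ts_step: "stable_model (bc_prog B (Suc l)) X \<Longrightarrow> sigma l X \<in> ts_states B \<Longrightarrow>
            sigma (Suc l) X \<in> ts_states B"

definition ts_delta :: "('f, 'o, 'a) bc_desc \<Rightarrow> (('f \<times> 'o) set \<times> 'a set \<times> ('f \<times> 'o) set) set" where
  "ts_delta B = {(sigma l X, {a. Pos (AAt l a) \<in> X}, sigma (Suc l) X) | l X.
                   stable_model (bc_prog B (Suc l)) X \<and> sigma l X \<in> ts_states B}"

section \<open>The encoding bc(W)\<close>

datatype ('v, 'p) fluent = FlVar 'v | FlPlace 'p | FlTrans
datatype 'd fval = Val 'd | Null | BTrue | BFalse

datatype ('v, 'd) dnf_lit = DEq 'v 'd | DUndef 'v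

fun dnf_lit_guard :: "('v, 'd) dnf_lit \<Rightarrow> ('v, 'd) guard" where
  "dnf_lit_guard (DEq v w0) = GEq (GVar v) (GConst w0)"
| "dnf_lit_guard (DUndef v) = GNot (GDef v)"

fun dnf_lit_var :: "('v, 'd) dnf_lit \<Rightarrow> 'v" where
  "dnf_lit_var (DEq v w0) = v"
| "dnf_lit_var (DUndef v) = v"

fun dnf_lit_tr :: "('v, 'd) dnf_lit \<Rightarrow> (('v, 'p) fluent \<times> 'd fval)" where
  "dnf_lit_tr (DEq v w0) = (FlVar v, Val w0)"
| "dnf_lit_tr (DUndef v) = (FlVar v, Null)"

definition dnf_char :: "('v, 'd) data_model \<Rightarrow> ('v, 'd) guard \<Rightarrow> ('v, 'd) dnf_lit list list \<Rightarrow> bool" where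
  "dnf_char D g \<phi> \<longleftrightarrow>
     (\<forall>\<eta>. assignment D \<eta> \<longrightarrow>
        (holds D \<eta> g \<longleftrightarrow> (\<exists>c \<in> set \<phi>. \<forall>l \<in> set c. holds D \<eta> (dnf_lit_guard l))))"

definition bc_enc ::
  "('v, 'd, 'p, 't) dawnet \<Rightarrow> ('t \<Rightarrow> ('v, 'd) dnf_lit list list) \<Rightarrow>
   (('v, 'p) fluent, 'd fval, 't) bc_desc" where
  "bc_enc W dnf =
   \<lparr> bfluents = FlVar ` Vprime W \<union> FlPlace ` places W \<union> {FlTrans},
     bdom = (\<lambda>f. case f of FlVar v \<Rightarrow> Val ` adm W v \<union> {Null}
                          | FlPlace p \<Rightarrow> {BTrue, BFalse}
                          | FlTrans \<Rightarrow> {BTrue, BFalse}),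
     bactions = transs W,
     bdyn =
        {(Some (FlVar v, w0), {Inl (FlVar v, w0)}, {(FlVar v, w0)}) | v w0.
           v \<in> Vprime W \<and> w0 \<in> Val ` adm W v \<union> {Null}}
      \<union> {(Some (FlPlace p, w0), {Inl (FlPlace p, w0)}, {(FlPlace p, w0)}) | p w0.
           p \<in> places W \<and> w0 \<in> {BTrue, BFalse}}
      \<union> {(Some (FlPlace p, BFalse), {Inr t}, {}) | p t.
           t \<in> transs W \<and> p \<in> preset W t - postset W t}
      \<union> {(Some (FlPlace p, BTrue), {Inr t}, {}) | p t.
           t \<in> transs W \<and> p \<in> postset W t - preset W t}
      \<union> {(Some (FlVar v, Val d), {Inr t}, {(FlVar v, Val d)}) | v d t S.
           t \<in> transs W \<and> wr W t v = Some S \<and> d \<in> S}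
      \<union> {(Some (FlVar v, Null), {Inr t}, {}) | v t.
           t \<in> transs W \<and> wr W t v = Some {}}
      \<union> {(None, {Inr t}, {(FlVar v, w0)}) | v w0 t S.
           t \<in> transs W \<and> wr W t v = Some S \<and> S \<noteq> {} \<and>
           w0 \<in> {Null} \<union> Val ` (adm W v - S)}
      \<union> {(None, {Inr t, Inr s}, {}) | t s.
           t \<in> transs W \<and> s \<in> transs W \<and> t \<noteq> s}
      \<union> {(None, {Inr t, Inl (FlPlace p, BFalse)}, {}) | t p.
           t \<in> transs W \<and> p \<in> preset W t}
      \<union> {(Some (FlTrans, BTrue), {Inr t}, {}) | t. t \<in> transs W}
      \<union> {(None, {Inr t} \<union> Inl ` dnf_lit_tr ` set c, {}) | t c.
           t \<in> transs W \<and> \<not> guard_valid (dmodel W) (gd W t) \<and> c \<in> set (dnf t)},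
     bstat = {},
     binit = {(FlPlace (pstart W), BTrue)}
           \<union> {(FlPlace p, BFalse) | p. p \<in> places W \<and> p \<noteq> pstart W}
           \<union> {(FlVar v, Null) | v. v \<in> Vprime W}
           \<union> {(FlTrans, BTrue)} \<rparr>"

end

theory Submission
  imports Defs
begin

definition fvo :: "('v, 'd, 'p, 't) dawnet \<Rightarrow> ('p \<Rightarrow> nat) \<Rightarrow> ('v \<rightharpoonup> 'd) \<Rightarrow> ('v, 'p) fluent \<Rightarrow> 'd fval" where
  "fvo W M \<eta> f = (case f of FlVar v \<Rightarrow> (case \<eta> v of None \<Rightarrow> Null | Some d \<Rightarrow> Val d)
      | FlPlace p \<Rightarrow> (if M p > 0 then BTrue else BFalse) | FlTrans \<Rightarrow> BTrue)"

definition flu :: "('v, 'd, 'p, 't) dawnet \<Rightarrow> ('v, 'p) fluent set" where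
  "flu W = FlVar ` Vprime W \<union> FlPlace ` places W \<union> {FlTrans}"

definition encS :: "('v, 'd, 'p, 't) dawnet \<Rightarrow> ('v, 'd, 'p) dstate \<Rightarrow> (('v, 'p) fluent \<times> 'd fval) set" where
  "encS W s = {(f, fvo W (fst s) (snd s) f) | f. f \<in> flu W}"

lemma bc_simps:
  "bfluents (bc_enc W dnf) = flu W"
  "bactions (bc_enc W dnf) = transs W"
  "bstat (bc_enc W dnf) = {}"
  "bdom (bc_enc W dnf) (FlVar v) = Val ` adm W v \<union> {Null}"
  "bdom (bc_enc W dnf) (FlPlace p) = {BTrue, BFalse}"
  "bdom (bc_enc W dnf) FlTrans = {BTrue, BFalse}"
  by (auto simp: bc_enc_def flu_def)

locale ctx =
  fixes W :: "('v, 'd, 'p, 't) dawnet"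
    and dnf :: "'t \<Rightarrow> ('v, 'd) dnf_lit list list"
  assumes wf: "wf_dawnet W"
    and safe: "one_safe W"
    and dnfa: "\<forall>t \<in> transs W. \<not> guard_valid (dmodel W) (gd W t) \<longrightarrow>
            dnf_char (dmodel W) (GNot (gd W t)) (dnf t) \<and>
            (\<forall>c \<in> set (dnf t). \<forall>l \<in> set c. dnf_lit_var l \<in> Vprime W)"
begin

lemma pre_places: "t \<in> transs W \<Longrightarrow> p \<in> preset W t \<Longrightarrow> p \<in> places W"
  using wf by (auto simp: wf_dawnet_def preset_def)
lemma post_places: "p \<in> postset W t \<Longrightarrow> p \<in> places W"
  using wf by (auto simp: wf_dawnet_def postset_def)
lemma pre_places': "p \<in> preset W t \<Longrightarrow> p \<in> places W"
  using wf by (auto simp: wf_dawnet_def preset_def)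
lemma wr_Vprime: "t \<in> transs W \<Longrightarrow> wr W t v = Some S \<Longrightarrow> v \<in> Vprime W"
  by (auto simp: Vprime_def)
lemma wr_adm: "t \<in> transs W \<Longrightarrow> wr W t v = Some S \<Longrightarrow> d \<in> S \<Longrightarrow> d \<in> adm W v"
  unfolding adm_def by (rule UN_I[of t]) auto
lemma wr_ddm: "t \<in> transs W \<Longrightarrow> wr W t v = Some S \<Longrightarrow> d \<in> S \<Longrightarrow> d \<in> ddm (dmodel W) v"
  using wf unfolding wf_dawnet_def by blast
lemma Vprime_dvars: "Vprime W \<subseteq> dvars (dmodel W)"
proof
  fix v assume "v \<in> Vprime W"
  then obtain t where t: "t \<in> transs W" "v \<in> dom (wr W t) \<or> v \<in> guard_vars (gd W t)"
    by (auto simp: Vprime_def)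
  then show "v \<in> dvars (dmodel W)" using wf unfolding wf_dawnet_def by blast
qed

definition inv :: "('v, 'd, 'p) dstate \<Rightarrow> bool" where
  "inv s \<longleftrightarrow> (\<forall>p. p \<notin> places W \<longrightarrow> fst s p = 0) \<and> (\<forall>v. v \<notin> Vprime W \<longrightarrow> snd s v = None)
     \<and> (\<forall>v d. snd s v = Some d \<longrightarrow> d \<in> adm W v \<and> d \<in> ddm (dmodel W) v)"

lemma vf_D:
  assumes "valid_firing W (M, \<eta>) t (M', \<eta>')"
  shows "t \<in> transs W" "preset W t \<subseteq> {p. M p > 0}" "holds (dmodel W) \<eta> (gd W t)"
    "\<And>p. M' p = (if p \<in> preset W t - postset W t then M p - 1
                    else if p \<in> postset W t - preset W t then M p + 1 else M p)"
    "dom \<eta>' = (dom \<eta> \<union> {v. \<exists>S. wr W t v = Some S \<and> S \<noteq> {}}) - {v. wr W t v = Some {}}"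
    "\<And>v. v \<in> dom \<eta>' \<Longrightarrow> v \<in> dom (wr W t) \<Longrightarrow> the (\<eta>' v) \<in> the (wr W t v)"
    "\<And>v. v \<in> dom \<eta>' \<Longrightarrow> v \<notin> dom (wr W t) \<Longrightarrow> \<eta>' v = \<eta> v"
  using assms by (auto simp: valid_firing_def)

lemma vf_var:
  assumes "valid_firing W (M, \<eta>) t (M', \<eta>')"
  shows "wr W t v = Some {} \<Longrightarrow> \<eta>' v = None"
    "wr W t v = Some S \<Longrightarrow> S \<noteq> {} \<Longrightarrow> \<exists>d\<in>S. \<eta>' v = Some d"
    "wr W t v = None \<Longrightarrow> \<eta>' v = \<eta> v"
proof -
  note D = vf_D[OF assms]
  show "wr W t v = Some {} \<Longrightarrow> \<eta>' v = None" using D(5) by auto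
  show "wr W t v = Some S \<Longrightarrow> S \<noteq> {} \<Longrightarrow> \<exists>d\<in>S. \<eta>' v = Some d"
  proof -
    assume a: "wr W t v = Some S" "S \<noteq> {}"
    then have "v \<in> dom \<eta>'" using D(5) by auto
    moreover have "v \<in> dom (wr W t)" using a by auto
    ultimately have "the (\<eta>' v) \<in> S" using D(6)[of v] a by auto
    then show ?thesis using \<open>v \<in> dom \<eta>'\<close> by force
  qed
  show "wr W t v = None \<Longrightarrow> \<eta>' v = \<eta> v"
  proof -
    assume a: "wr W t v = None"
    show ?thesis
    proof (cases "v \<in> dom \<eta>'")
      case True then show ?thesis using D(7) a by auto
    next
      case False
      then have "v \<notin> dom \<eta>" using D(5) a by auto
      then show ?thesis using False by auto
    qed
  qed
qed

lemma vf_intro: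
  assumes "t \<in> transs W" "preset W t \<subseteq> {p. M p > 0}" "holds (dmodel W) \<eta> (gd W t)"
    "\<And>p. M' p = (if p \<in> preset W t - postset W t then M p - 1
                    else if p \<in> postset W t - preset W t then M p + 1 else M p)"
    "\<And>v. wr W t v = Some {} \<Longrightarrow> \<eta>' v = None"
    "\<And>v S. wr W t v = Some S \<Longrightarrow> S \<noteq> {} \<Longrightarrow> \<exists>d\<in>S. \<eta>' v = Some d"
    "\<And>v. wr W t v = None \<Longrightarrow> \<eta>' v = \<eta> v"
  shows "valid_firing W (M, \<eta>) t (M', \<eta>')"
proof -
  have dom: "dom \<eta>' = (dom \<eta> \<union> {v. \<exists>S. wr W t v = Some S \<and> S \<noteq> {}}) - {v. wr W t v = Some {}}"
  proof (rule set_eqI)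
    fix v show "v \<in> dom \<eta>' \<longleftrightarrow> v \<in> (dom \<eta> \<union> {v. \<exists>S. wr W t v = Some S \<and> S \<noteq> {}}) - {v. wr W t v = Some {}}"
      using assms(5-7)[of v] by (cases "wr W t v") fastforce+
  qed
  have r: "\<forall>v \<in> dom \<eta>'. (v \<in> dom (wr W t) \<longrightarrow> the (\<eta>' v) \<in> the (wr W t v)) \<and>
                      (v \<notin> dom (wr W t) \<longrightarrow> \<eta>' v = \<eta> v)"
  proof
    fix v assume "v \<in> dom \<eta>'"
    then show "(v \<in> dom (wr W t) \<longrightarrow> the (\<eta>' v) \<in> the (wr W t v)) \<and>
                      (v \<notin> dom (wr W t) \<longrightarrow> \<eta>' v = \<eta> v)"
    proof (cases "wr W t v")
      case None then show ?thesis using assms(7)[of v] by auto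
    next
      case (Some S) then show ?thesis using assms(5,6)[of v] \<open>v \<in> dom \<eta>'\<close> by (cases "S = {}") force+
    qed
  qed
  show ?thesis unfolding valid_firing_def using assms(1-4) dom r by auto
qed

lemma inv_step:
  assumes "inv s" "valid_firing W s t s'"
  shows "inv s'"
proof -
  obtain M \<eta> M' \<eta>' where s: "s = (M, \<eta>)" "s' = (M', \<eta>')" by (cases s, cases s') auto
  note D = vf_D[OF assms(2)[unfolded s]]
  note V = vf_var[OF assms(2)[unfolded s]]
  have 1: "\<forall>p. p \<notin> places W \<longrightarrow> M' p = 0"
    using assms(1) D(4) pre_places' post_places by (auto simp: inv_def s)
  have 2: "\<forall>v. v \<notin> Vprime W \<longrightarrow> \<eta>' v = None"
  proof (intro allI impI)
    fix v assume v: "v \<notin> Vprime W"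
    then have "wr W t v = None" using wr_Vprime D(1) by (cases "wr W t v") auto
    then show "\<eta>' v = None" using V(3) assms(1) v by (auto simp: inv_def s)
  qed
  have 3: "\<forall>v d. \<eta>' v = Some d \<longrightarrow> d \<in> adm W v \<and> d \<in> ddm (dmodel W) v"
  proof (intro allI impI)
    fix v d assume e: "\<eta>' v = Some d"
    show "d \<in> adm W v \<and> d \<in> ddm (dmodel W) v"
    proof (cases "wr W t v")
      case None then show ?thesis using V(3) e assms(1) by (auto simp: inv_def s)
    next
      case (Some S)
      then have "v \<in> dom \<eta>'" "v \<in> dom (wr W t)" using e by auto
      then have "d \<in> S" using D(6)[of v] e Some by auto
      then show ?thesis using wr_adm wr_ddm D(1) Some by blast
    qed
  qed
  show ?thesis using 1 2 3 by (simp add: inv_def s)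
qed

lemma reach_inv: "s \<in> rg_states W \<Longrightarrow> inv s"
proof (induction rule: rg_states.induct)
  case rg_init_in
  then show ?case using wf by (auto simp: inv_def rg_init_def init_marking_def wf_dawnet_def)
next
  case (rg_step s t s')
  then show ?case using inv_step by blast
qed

lemma reach_safe: "s \<in> rg_states W \<Longrightarrow> fst s p \<le> 1"
  using safe reach_inv[of s] by (cases "p \<in> places W") (auto simp: one_safe_def inv_def)

lemma fvo_dom: "inv (M, \<eta>) \<Longrightarrow> f \<in> flu W \<Longrightarrow> fvo W M \<eta> f \<in> bdom (bc_enc W dnf) f"
  by (auto simp: fvo_def flu_def inv_def bc_simps split: fluent.splits option.splits)

lemma encS_inj: "inj_on (encS W) (rg_states W)"
proof (rule inj_onI)
  fix s1 s2 assume a: "s1 \<in> rg_states W" "s2 \<in> rg_states W" "encS W s1 = encS W s2"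
  obtain M1 \<eta>1 M2 \<eta>2 where s: "s1 = (M1, \<eta>1)" "s2 = (M2, \<eta>2)" by (cases s1, cases s2) auto
  have eq: "f \<in> flu W \<Longrightarrow> fvo W M1 \<eta>1 f = fvo W M2 \<eta>2 f" for f
  proof -
    assume f: "f \<in> flu W"
    have "(f, fvo W M1 \<eta>1 f) \<in> encS W s2" using a(3) f by (auto simp: encS_def s)
    then show ?thesis by (auto simp: encS_def s)
  qed
  have i1: "inv s1" "inv s2" using a reach_inv by auto
  have "M1 p = M2 p" for p
  proof (cases "p \<in> places W")
    case True
    then have "fvo W M1 \<eta>1 (FlPlace p) = fvo W M2 \<eta>2 (FlPlace p)" using eq by (auto simp: flu_def)
    moreover have "M1 p \<le> 1" "M2 p \<le> 1" using reach_safe a s by force+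
    ultimately show ?thesis by (auto simp: fvo_def split: if_splits)
  next
    case False then show ?thesis using i1 by (auto simp: inv_def s)
  qed
  moreover have "\<eta>1 v = \<eta>2 v" for v
  proof (cases "v \<in> Vprime W")
    case True
    then have "fvo W M1 \<eta>1 (FlVar v) = fvo W M2 \<eta>2 (FlVar v)" using eq by (auto simp: flu_def)
    then show ?thesis by (auto simp: fvo_def split: option.splits)
  next
    case False then show ?thesis using i1 by (auto simp: inv_def s)
  qed
  ultimately show "s1 = s2" using s by auto
qed

end

lemma stable_closed:
  assumes "stable_model P X" "(h, b, n) \<in> P" "n \<inter> X = {}" "b \<subseteq> X"
  shows "h \<inter> X \<noteq> {}"
proof -
  have "(h, b) \<in> reduct P X" using assms(2,3) unfolding reduct_def by auto
  moreover have "closed_under (reduct P X) X" using assms(1) unfolding stable_model_def by simp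
  ultimately show ?thesis using assms(4) unfolding closed_under_def by auto
qed

lemma stable_cons: "stable_model P X \<Longrightarrow> Pos a \<in> X \<Longrightarrow> Neg a \<in> X \<Longrightarrow> False"
  unfolding stable_model_def consistent_def by auto

lemma stable_supp:
  assumes "stable_model P X" "a \<in> X"
  shows "\<exists>h b n. (h, b, n) \<in> P \<and> n \<inter> X = {} \<and> b \<subseteq> X \<and> a \<in> h"
proof (rule ccontr)
  assume na: "\<not> ?thesis"
  have "closed_under (reduct P X) (X - {a})"
    unfolding closed_under_def
  proof (clarify)
    fix h b assume r: "(h, b) \<in> reduct P X" "b \<subseteq> X - {a}" "h \<inter> (X - {a}) = {}"
    then obtain n where n: "(h, b, n) \<in> P" "n \<inter> X = {}" by (auto simp: reduct_def)
    have "b \<subseteq> X" using r(2) by auto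
    then have "h \<inter> X \<noteq> {}" using stable_closed[OF assms(1) n] by auto
    then have "a \<in> h" using r(3) by auto
    then show False using na n \<open>b \<subseteq> X\<close> by auto
  qed
  moreover have "X - {a} \<subset> X" using assms(2) by auto
  ultimately show False using assms(1) unfolding stable_model_def by auto
qed

lemma prog_dyn: "(h, A, C) \<in> bdyn B \<Longrightarrow> i < l \<Longrightarrow>
    (head_lits (Suc i) h, after_lit i ` A, neg_at (Suc i) C) \<in> bc_prog B l"
  unfolding bc_prog_def by (intro UnI1 UnI2) auto
lemma prog_init: "(f, w) \<in> binit B \<Longrightarrow> ({Pos (FAt 0 f w)}, {}, {}) \<in> bc_prog B l"
  unfolding bc_prog_def by (intro UnI1 UnI2) auto
lemma prog_fchoice: "f \<in> bfluents B \<Longrightarrow> w \<in> bdom B f \<Longrightarrow>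
   ({Pos (FAt 0 f w), Neg (FAt 0 f w)}, {}, {}) \<in> bc_prog B l"
  unfolding bc_prog_def by (intro UnI1 UnI2) auto
lemma prog_achoice: "a \<in> bactions B \<Longrightarrow> i < l \<Longrightarrow>
   ({Pos (AAt i a), Neg (AAt i a)}, {}, {}) \<in> bc_prog B l"
  unfolding bc_prog_def by (intro UnI1 UnI2) auto
lemma prog_uniq: "f \<in> bfluents B \<Longrightarrow> i \<le> l \<Longrightarrow>
   ({}, {}, {Pos (FAt i f w0) | w0. w0 \<in> bdom B f}) \<in> bc_prog B l"
  unfolding bc_prog_def by (intro UnI1 UnI2) auto
lemma prog_neg: "f \<in> bfluents B \<Longrightarrow> w0 \<in> bdom B f \<Longrightarrow> w \<in> bdom B f \<Longrightarrow> w0 \<noteq> w \<Longrightarrow> i \<le> l \<Longrightarrow>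
   ({Neg (FAt i f w0)}, {Pos (FAt i f w)}, {}) \<in> bc_prog B l"
  unfolding bc_prog_def by (intro UnI2) auto

lemma prog_cases:
  assumes "r \<in> bc_prog B l"
  obtains (stat) h A C i where "(h, A, C) \<in> bstat B" "i \<le> l" "r = (head_lits i h, pos_at i A, neg_at i C)"
  | (dyn) h A C i where "(h, A, C) \<in> bdyn B" "i < l" "r = (head_lits (Suc i) h, after_lit i ` A, neg_at (Suc i) C)"
  | (init) f w where "(f, w) \<in> binit B" "r = ({Pos (FAt 0 f w)}, {}, {})"
  | (fchoice) f w where "f \<in> bfluents B" "w \<in> bdom B f" "r = ({Pos (FAt 0 f w), Neg (FAt 0 f w)}, {}, {})"
  | (achoice) a i where "a \<in> bactions B" "i < l" "r = ({Pos (AAt i a), Neg (AAt i a)}, {}, {})"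
  | (uniq) f i where "f \<in> bfluents B" "i \<le> l" "r = ({}, {}, {Pos (FAt i f w0) | w0. w0 \<in> bdom B f})"
  | (neg) f w0 w i where "f \<in> bfluents B" "w0 \<in> bdom B f" "w \<in> bdom B f" "w0 \<noteq> w" "i \<le> l"
      "r = ({Neg (FAt i f w0)}, {Pos (FAt i f w)}, {})"
  using assms unfolding bc_prog_def
  apply (elim UnE CollectE exE conjE)
  apply (rule that(1); assumption)
  apply (rule that(2); assumption)
  apply (rule that(3); assumption)
  apply (rule that(4); assumption)
  apply (rule that(5); assumption)
  apply (rule that(6); assumption)
  apply (rule that(7); assumption)
  done

context ctx begin

abbreviation "B \<equiv> bc_enc W dnf"

lemma dyn_cases:
  assumes "(h, A, C) \<in> bdyn B"
  obtains (inV) v w0 where "v \<in> Vprime W" "w0 \<in> Val ` adm W v \<union> {Null}"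
      "h = Some (FlVar v, w0)" "A = {Inl (FlVar v, w0)}" "C = {(FlVar v, w0)}"
  | (inP) p w0 where "p \<in> places W" "w0 \<in> {BTrue, BFalse}"
      "h = Some (FlPlace p, w0)" "A = {Inl (FlPlace p, w0)}" "C = {(FlPlace p, w0)}"
  | (pF) p t where "t \<in> transs W" "p \<in> preset W t - postset W t"
      "h = Some (FlPlace p, BFalse)" "A = {Inr t}" "C = {}"
  | (pT) p t where "t \<in> transs W" "p \<in> postset W t - preset W t"
      "h = Some (FlPlace p, BTrue)" "A = {Inr t}" "C = {}"
  | (wrt) v d t S where "t \<in> transs W" "wr W t v = Some S" "d \<in> S"
      "h = Some (FlVar v, Val d)" "A = {Inr t}" "C = {(FlVar v, Val d)}"
  | (nul) v t where "t \<in> transs W" "wr W t v = Some {}"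
      "h = Some (FlVar v, Null)" "A = {Inr t}" "C = {}"
  | (wrc) v w0 t S where "t \<in> transs W" "wr W t v = Some S" "S \<noteq> {}"
      "w0 \<in> {Null} \<union> Val ` (adm W v - S)" "h = None" "A = {Inr t}" "C = {(FlVar v, w0)}"
  | (two) t s where "t \<in> transs W" "s \<in> transs W" "t \<noteq> s" "h = None" "A = {Inr t, Inr s}" "C = {}"
  | (pre) t p where "t \<in> transs W" "p \<in> preset W t" "h = None" "A = {Inr t, Inl (FlPlace p, BFalse)}" "C = {}"
  | (tr) t where "t \<in> transs W" "h = Some (FlTrans, BTrue)" "A = {Inr t}" "C = {}"
  | (grd) t c where "t \<in> transs W" "\<not> guard_valid (dmodel W) (gd W t)" "c \<in> set (dnf t)"
      "h = None" "A = {Inr t} \<union> Inl ` dnf_lit_tr ` set c" "C = {}"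
  using assms unfolding bc_enc_def bc_desc.select_convs
  apply (elim UnE)
  apply (elim CollectE exE conjE Pair_inject, rule that(1); assumption)
  apply (elim CollectE exE conjE Pair_inject, rule that(2); assumption)
  apply (elim CollectE exE conjE Pair_inject, rule that(3); assumption)
  apply (elim CollectE exE conjE Pair_inject, rule that(4); assumption)
  apply (elim CollectE exE conjE Pair_inject, rule that(5); assumption)
  apply (elim CollectE exE conjE Pair_inject, rule that(6); assumption)
  apply (elim CollectE exE conjE Pair_inject, rule that(7); assumption)
  apply (elim CollectE exE conjE Pair_inject, rule that(8); assumption)
  apply (elim CollectE exE conjE Pair_inject, rule that(9); assumption)
  apply (elim CollectE exE conjE Pair_inject, rule that(10); assumption)
  apply (elim CollectE exE conjE Pair_inject, rule that(11); assumption)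
  done

lemma dyn_inV: "v \<in> Vprime W \<Longrightarrow> w0 \<in> Val ` adm W v \<union> {Null} \<Longrightarrow>
   (Some (FlVar v, w0), {Inl (FlVar v, w0)}, {(FlVar v, w0)}) \<in> bdyn B"
  unfolding bc_enc_def bc_desc.select_convs by auto
lemma dyn_inP: "p \<in> places W \<Longrightarrow> w0 \<in> {BTrue, BFalse} \<Longrightarrow>
   (Some (FlPlace p, w0), {Inl (FlPlace p, w0)}, {(FlPlace p, w0)}) \<in> bdyn B"
  unfolding bc_enc_def bc_desc.select_convs by auto
lemma dyn_pF: "t \<in> transs W \<Longrightarrow> p \<in> preset W t - postset W t \<Longrightarrow>
   (Some (FlPlace p, BFalse), {Inr t}, {}) \<in> bdyn B"
  unfolding bc_enc_def bc_desc.select_convs by auto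
lemma dyn_pT: "t \<in> transs W \<Longrightarrow> p \<in> postset W t - preset W t \<Longrightarrow>
   (Some (FlPlace p, BTrue), {Inr t}, {}) \<in> bdyn B"
  unfolding bc_enc_def bc_desc.select_convs by auto
lemma dyn_wrt: "t \<in> transs W \<Longrightarrow> wr W t v = Some S \<Longrightarrow> d \<in> S \<Longrightarrow>
   (Some (FlVar v, Val d), {Inr t}, {(FlVar v, Val d)}) \<in> bdyn B"
  unfolding bc_enc_def bc_desc.select_convs by auto
lemma dyn_nul: "t \<in> transs W \<Longrightarrow> wr W t v = Some {} \<Longrightarrow>
   (Some (FlVar v, Null), {Inr t}, {}) \<in> bdyn B"
  unfolding bc_enc_def bc_desc.select_convs by auto
lemma dyn_wrc: "t \<in> transs W \<Longrightarrow> wr W t v = Some S \<Longrightarrow> S \<noteq> {} \<Longrightarrow>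
   w0 \<in> {Null} \<union> Val ` (adm W v - S) \<Longrightarrow> (None, {Inr t}, {(FlVar v, w0)}) \<in> bdyn B"
  unfolding bc_enc_def bc_desc.select_convs by auto
lemma dyn_two: "t \<in> transs W \<Longrightarrow> s \<in> transs W \<Longrightarrow> t \<noteq> s \<Longrightarrow> (None, {Inr t, Inr s}, {}) \<in> bdyn B"
  unfolding bc_enc_def bc_desc.select_convs by auto
lemma dyn_pre: "t \<in> transs W \<Longrightarrow> p \<in> preset W t \<Longrightarrow>
   (None, {Inr t, Inl (FlPlace p, BFalse)}, {}) \<in> bdyn B"
  unfolding bc_enc_def bc_desc.select_convs by auto
lemma dyn_tr: "t \<in> transs W \<Longrightarrow> (Some (FlTrans, BTrue), {Inr t}, {}) \<in> bdyn B"
  unfolding bc_enc_def bc_desc.select_convs by auto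
lemma dyn_grd: "t \<in> transs W \<Longrightarrow> \<not> guard_valid (dmodel W) (gd W t) \<Longrightarrow> c \<in> set (dnf t) \<Longrightarrow>
   (None, {Inr t} \<union> Inl ` dnf_lit_tr ` set c, {}) \<in> bdyn B"
  unfolding bc_enc_def bc_desc.select_convs by (intro UnI2) blast

lemma binit_eq: "binit B = {(FlPlace (pstart W), BTrue)}
           \<union> {(FlPlace p, BFalse) | p. p \<in> places W \<and> p \<noteq> pstart W}
           \<union> {(FlVar v, Null) | v. v \<in> Vprime W}
           \<union> {(FlTrans, BTrue)}"
  unfolding bc_enc_def by simp
lemma bdyn_simp: "bdyn B = bdyn (bc_enc W dnf)" by simp

end

context ctx begin

lemma binit_dom: "(f, w) \<in> binit B \<Longrightarrow> f \<in> flu W \<and> w \<in> bdom B f"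
  using wf unfolding binit_eq by (auto simp: flu_def bc_simps wf_dawnet_def)

lemma head_dom:
  assumes "(h, b, n) \<in> bc_prog B L" "Pos (FAt i f w) \<in> h"
  shows "f \<in> flu W \<and> w \<in> bdom B f"
  using assms(1)
proof (cases rule: prog_cases)
  case (dyn h' A C j)
  from dyn(1) show ?thesis
  proof (cases rule: dyn_cases)
  qed (use dyn assms(2) in \<open>auto simp: flu_def bc_simps dest: pre_places' post_places wr_Vprime wr_adm\<close>)
qed (use assms binit_dom in \<open>auto simp: bc_simps\<close>)

lemma head_AAt:
  assumes "(h, b, n) \<in> bc_prog B L" "Pos (AAt i a) \<in> h"
  shows "a \<in> transs W \<and> i < L"
  using assms(1)
proof (cases rule: prog_cases)
  case (dyn h' A C j)
  from dyn(1) show ?thesis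
  proof (cases rule: dyn_cases)
  qed (use dyn assms(2) in auto)
qed (use assms in \<open>auto simp: bc_simps\<close>)

lemma head_Suc:
  assumes "(h, b, n) \<in> bc_prog B L" "Pos (FAt (Suc i) f w) \<in> h"
  shows "i < L \<and> ((f \<in> flu W \<and> f \<noteq> FlTrans \<and> w \<in> bdom B f \<and> b = {Pos (FAt i f w)} \<and> n = {Neg (FAt (Suc i) f w)})
     \<or> (\<exists>t \<in> transs W. b = {Pos (AAt i t)} \<and>
          ((\<exists>p. f = FlPlace p \<and> w = BFalse \<and> p \<in> preset W t - postset W t)
         \<or> (\<exists>p. f = FlPlace p \<and> w = BTrue \<and> p \<in> postset W t - preset W t)
         \<or> (\<exists>v d S. f = FlVar v \<and> w = Val d \<and> wr W t v = Some S \<and> d \<in> S)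
         \<or> (\<exists>v. f = FlVar v \<and> w = Null \<and> wr W t v = Some {})
         \<or> (f = FlTrans \<and> w = BTrue))))"
  using assms(1)
proof (cases rule: prog_cases)
  case (dyn h' A C j)
  from dyn(1) show ?thesis
  proof (cases rule: dyn_cases)
  qed (use dyn assms(2) in \<open>auto simp: flu_def bc_simps neg_at_def\<close>)
qed (use assms in \<open>auto simp: bc_simps\<close>)

end

context ctx begin

lemma fvo_simps[simp]:
  "fvo W M \<eta> (FlVar v) = (case \<eta> v of None \<Rightarrow> Null | Some d \<Rightarrow> Val d)"
  "fvo W M \<eta> (FlPlace p) = (if M p > 0 then BTrue else BFalse)"
  "fvo W M \<eta> FlTrans = BTrue"
  by (auto simp: fvo_def)

lemma flu_simps[simp]:
  "FlTrans \<in> flu W" "FlVar v \<in> flu W \<longleftrightarrow> v \<in> Vprime W" "FlPlace p \<in> flu W \<longleftrightarrow> p \<in> places W"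
  by (auto simp: flu_def)

lemma inv_assignment: "inv (M, \<eta>) \<Longrightarrow> assignment (dmodel W) \<eta>"
  using Vprime_dvars unfolding inv_def assignment_def by (force simp: domIff)

lemma sigma_encS: "sigma l X = encS W (M, \<eta>) \<Longrightarrow>
   Pos (FAt l f w) \<in> X \<longleftrightarrow> f \<in> flu W \<and> w = fvo W M \<eta> f"
proof -
  assume a: "sigma l X = encS W (M, \<eta>)"
  have "Pos (FAt l f w) \<in> X \<longleftrightarrow> (f, w) \<in> sigma l X" by (simp add: sigma_def)
  also have "\<dots> \<longleftrightarrow> (f, w) \<in> encS W (M, \<eta>)" using a by simp
  also have "\<dots> \<longleftrightarrow> f \<in> flu W \<and> w = fvo W M \<eta> f" by (auto simp: encS_def)
  finally show ?thesis .
qed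

lemma after_lit_Inr: "after_lit i ` {Inr t} = {Pos (AAt i t)}" by simp

lemma step_back:
  assumes s: "(M, \<eta>) \<in> rg_states W"
    and X: "stable_model (bc_prog B (Suc l)) X"
    and sig: "sigma l X = encS W (M, \<eta>)"
  shows "\<exists>t M' \<eta>'. valid_firing W (M, \<eta>) t (M', \<eta>') \<and> {a. Pos (AAt l a) \<in> X} = {t}
           \<and> sigma (Suc l) X = encS W (M', \<eta>')"
proof -
  note atl = sigma_encS[OF sig]
  note cl = stable_closed[OF X]
  note sp = stable_supp[OF X]
  note cons = stable_cons[OF X]
  have invs: "inv (M, \<eta>)" using reach_inv[OF s] .
  have U: "\<exists>w. Pos (FAt (Suc l) f w) \<in> X" if f: "f \<in> flu W" for f
  proof -
    have r: "({}, {}, {Pos (FAt (Suc l) f w0) | w0. w0 \<in> bdom B f}) \<in> bc_prog B (Suc l)"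
      by (rule prog_uniq) (use f in \<open>auto simp: bc_simps\<close>)
    have "{Pos (FAt (Suc l) f w0) | w0. w0 \<in> bdom B f} \<inter> X \<noteq> {}"
      using cl[OF r] by auto
    then show ?thesis by auto
  qed
  have U2: "w = w'" if p1: "Pos (FAt (Suc l) f w) \<in> X" and p2: "Pos (FAt (Suc l) f w') \<in> X" for f w w'
  proof (rule ccontr)
    assume ne: "w \<noteq> w'"
    obtain h b n where "(h, b, n) \<in> bc_prog B (Suc l)" "Pos (FAt (Suc l) f w) \<in> h"
      using sp[OF p1] by blast
    then have d1: "f \<in> flu W" "w \<in> bdom B f" using head_dom by blast+
    obtain h b n where "(h, b, n) \<in> bc_prog B (Suc l)" "Pos (FAt (Suc l) f w') \<in> h"
      using sp[OF p2] by blast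
    then have d2: "w' \<in> bdom B f" using head_dom by blast
    have "({Neg (FAt (Suc l) f w')}, {Pos (FAt (Suc l) f w)}, {}) \<in> bc_prog B (Suc l)"
      by (rule prog_neg) (use d1 d2 ne in \<open>auto simp: bc_simps\<close>)
    from cl[OF this] p1 have "Neg (FAt (Suc l) f w') \<in> X" by auto
    then show False using cons p2 by blast
  qed
  have dom1: "f \<in> flu W \<and> w \<in> bdom B f" if "Pos (FAt (Suc l) f w) \<in> X" for f w
    using sp[OF that] head_dom by blast
  define Q where "Q = (\<lambda>t' f w.
          ((\<exists>p. f = FlPlace p \<and> w = BFalse \<and> p \<in> preset W t' - postset W t')
         \<or> (\<exists>p. f = FlPlace p \<and> w = BTrue \<and> p \<in> postset W t' - preset W t')
         \<or> (\<exists>v d S. f = FlVar v \<and> w = Val d \<and> wr W t' v = Some S \<and> d \<in> S)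
         \<or> (\<exists>v. f = FlVar v \<and> w = Null \<and> wr W t' v = Some {})
         \<or> (f = FlTrans \<and> w = BTrue)))"
  have Sup0: "(f \<in> flu W \<and> f \<noteq> FlTrans \<and> Pos (FAt l f w) \<in> X)
     \<or> (\<exists>t' \<in> transs W. Pos (AAt l t') \<in> X \<and> Q t' f w)" if pw: "Pos (FAt (Suc l) f w) \<in> X" for f w
  proof -
    obtain h b n where r: "(h, b, n) \<in> bc_prog B (Suc l)" "n \<inter> X = {}" "b \<subseteq> X" "Pos (FAt (Suc l) f w) \<in> h"
      using sp[OF pw] by blast
    show ?thesis using head_Suc[OF r(1) r(4)] r(3) unfolding Q_def by auto
  qed
  obtain w where "Pos (FAt (Suc l) FlTrans w) \<in> X" using U[of FlTrans] by auto
  from Sup0[OF this] obtain t where t: "t \<in> transs W" "Pos (AAt l t) \<in> X" by blast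
  have act: "a = t" if pa: "Pos (AAt l a) \<in> X" for a
  proof (rule ccontr)
    assume ne: "a \<noteq> t"
    obtain h b n where "(h, b, n) \<in> bc_prog B (Suc l)" "Pos (AAt l a) \<in> h"
      using sp[OF pa] by blast
    then have a: "a \<in> transs W" using head_AAt by blast
    have "(None, {Inr t, Inr a}, {}) \<in> bdyn B" using dyn_two[OF t(1) a] ne by auto
    from prog_dyn[OF this, of l "Suc l"] have "({}, {Pos (AAt l t), Pos (AAt l a)}, {}) \<in> bc_prog B (Suc l)"
      by (simp add: neg_at_def)
    from cl[OF this] show False using t(2) pa by auto
  qed
  have SupQ: "(f \<in> flu W \<and> f \<noteq> FlTrans \<and> Pos (FAt l f w) \<in> X) \<or> Q t f w"
    if pw: "Pos (FAt (Suc l) f w) \<in> X" for f w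
  proof -
    from Sup0[OF pw] consider "f \<in> flu W \<and> f \<noteq> FlTrans \<and> Pos (FAt l f w) \<in> X"
      | t' where "Pos (AAt l t') \<in> X" "Q t' f w" by blast
    then show ?thesis
    proof cases
      case 1 then show ?thesis by blast
    next
      case 2 then show ?thesis using act[of t'] by simp
    qed
  qed
  have Sup: "(f \<in> flu W \<and> f \<noteq> FlTrans \<and> Pos (FAt l f w) \<in> X)
     \<or> ((\<exists>p. f = FlPlace p \<and> w = BFalse \<and> p \<in> preset W t - postset W t)
         \<or> (\<exists>p. f = FlPlace p \<and> w = BTrue \<and> p \<in> postset W t - preset W t)
         \<or> (\<exists>v d S. f = FlVar v \<and> w = Val d \<and> wr W t v = Some S \<and> d \<in> S)
         \<or> (\<exists>v. f = FlVar v \<and> w = Null \<and> wr W t v = Some {})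
         \<or> (f = FlTrans \<and> w = BTrue))" if pw: "Pos (FAt (Suc l) f w) \<in> X" for f w
    using SupQ[OF pw] unfolding Q_def .
  have fire: "Pos (FAt (Suc l) f w) \<in> X" if "(Some (f, w), {Inr t}, {}) \<in> bdyn B" for f w
  proof -
    from prog_dyn[OF that, of l "Suc l"] have "({Pos (FAt (Suc l) f w)}, {Pos (AAt l t)}, {}) \<in> bc_prog B (Suc l)"
      by (simp add: neg_at_def)
    from cl[OF this] show ?thesis using t(2) by auto
  qed
  have pre: "preset W t \<subseteq> {p. M p > 0}"
  proof
    fix p assume p: "p \<in> preset W t"
    show "p \<in> {p. M p > 0}"
    proof (rule ccontr)
      assume "p \<notin> {p. M p > 0}"
      then have "Pos (FAt l (FlPlace p) BFalse) \<in> X" using atl pre_places[OF t(1) p] by auto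
      moreover from prog_dyn[OF dyn_pre[OF t(1) p], of l "Suc l"]
      have "({}, {Pos (AAt l t), Pos (FAt l (FlPlace p) BFalse)}, {}) \<in> bc_prog B (Suc l)"
        by (simp add: neg_at_def)
      ultimately show False using cl[OF \<open>({}, {Pos (AAt l t), Pos (FAt l (FlPlace p) BFalse)}, {}) \<in> bc_prog B (Suc l)\<close>] t(2) by auto
    qed
  qed
  have asg: "assignment (dmodel W) \<eta>" using inv_assignment[OF invs] .
  have grd: "holds (dmodel W) \<eta> (gd W t)"
  proof (cases "guard_valid (dmodel W) (gd W t)")
    case True then show ?thesis using asg by (simp add: guard_valid_def)
  next
    case False
    show ?thesis
    proof (rule ccontr)
      assume nh: "\<not> holds (dmodel W) \<eta> (gd W t)"
      have dc: "dnf_char (dmodel W) (GNot (gd W t)) (dnf t)"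
        and vv: "\<forall>c \<in> set (dnf t). \<forall>l \<in> set c. dnf_lit_var l \<in> Vprime W"
        using dnfa t(1) False by auto
      obtain c where c: "c \<in> set (dnf t)" "\<forall>lt \<in> set c. holds (dmodel W) \<eta> (dnf_lit_guard lt)"
        using dc asg nh unfolding dnf_char_def by auto
      have sub: "after_lit l ` Inl ` dnf_lit_tr ` set c \<subseteq> X"
      proof
        fix x :: "(('v, 'p) fluent, 'd fval, 't) patom lit"
        assume "x \<in> after_lit l ` Inl ` dnf_lit_tr ` set c"
        then obtain lt where lt: "lt \<in> set c" "x = after_lit l (Inl (dnf_lit_tr lt))" by auto
        have hv: "dnf_lit_var lt \<in> Vprime W" using vv c(1) lt(1) by auto
        have hl: "holds (dmodel W) \<eta> (dnf_lit_guard lt)" using c(2) lt(1) by auto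
        show "x \<in> X"
        proof (cases lt)
          case (DEq v d)
          then show ?thesis using hl lt hv atl by (auto split: option.splits)
        next
          case (DUndef v)
          then show ?thesis using hl lt hv atl by (auto split: option.splits)
        qed
      qed
      from prog_dyn[OF dyn_grd[OF t(1) False c(1)], of l "Suc l"]
      have "({}, {Pos (AAt l t)} \<union> after_lit l ` Inl ` dnf_lit_tr ` set c, {}) \<in> bc_prog B (Suc l)"
        by (simp add: neg_at_def image_Un)
      from cl[OF this] sub t(2) show False by auto
    qed
  qed
  define M' where "M' = (\<lambda>p. if p \<in> preset W t - postset W t then M p - 1
                    else if p \<in> postset W t - preset W t then M p + 1 else M p)"
  define \<eta>' where "\<eta>' = (\<lambda>v. if v \<in> Vprime W \<and> (\<exists>d. Pos (FAt (Suc l) (FlVar v) (Val d)) \<in> X)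
      then Some (SOME d. Pos (FAt (Suc l) (FlVar v) (Val d)) \<in> X) else None)"
  have eA: "\<eta>' v = Some d" if "v \<in> Vprime W" "Pos (FAt (Suc l) (FlVar v) (Val d)) \<in> X" for v d
  proof -
    have "Pos (FAt (Suc l) (FlVar v) (Val (SOME d. Pos (FAt (Suc l) (FlVar v) (Val d)) \<in> X))) \<in> X"
      using that(2) by (rule someI)
    then have "(SOME d. Pos (FAt (Suc l) (FlVar v) (Val d)) \<in> X) = d" using U2 that(2) by blast
    then show ?thesis using that by (auto simp: \<eta>'_def)
  qed
  have eB: "\<eta>' v = None" if "Pos (FAt (Suc l) (FlVar v) Null) \<in> X" for v
    using U2 that by (fastforce simp: \<eta>'_def)
  have eC: "\<eta>' v = None" if "v \<notin> Vprime W" for v using that by (simp add: \<eta>'_def)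
  have safeM: "M p \<le> 1" for p using reach_safe[OF s] by simp
  have var1: "\<eta>' v = None \<and> Pos (FAt (Suc l) (FlVar v) Null) \<in> X" if "wr W t v = Some {}" for v
  proof -
    have "Pos (FAt (Suc l) (FlVar v) Null) \<in> X" using fire[OF dyn_nul[OF t(1) that]] .
    then show ?thesis using eB by auto
  qed
  have var2: "\<exists>d \<in> S. \<eta>' v = Some d \<and> Pos (FAt (Suc l) (FlVar v) (Val d)) \<in> X"
    if w: "wr W t v = Some S" "S \<noteq> {}" for v S
  proof -
    have v: "v \<in> Vprime W" using wr_Vprime[OF t(1) w(1)] .
    obtain w0 where w0: "Pos (FAt (Suc l) (FlVar v) w0) \<in> X" using U[of "FlVar v"] v by auto
    have wd: "w0 \<in> Val ` adm W v \<union> {Null}" using dom1[OF w0] by (simp add: bc_simps)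
    have "w0 \<notin> {Null} \<union> Val ` (adm W v - S)"
    proof
      assume wi: "w0 \<in> {Null} \<union> Val ` (adm W v - S)"
      from prog_dyn[OF dyn_wrc[OF t(1) w wi], of l "Suc l"]
      have "({}, {Pos (AAt l t)}, {Neg (FAt (Suc l) (FlVar v) w0)}) \<in> bc_prog B (Suc l)"
        by (simp add: neg_at_def)
      from cl[OF this] t(2) have "Neg (FAt (Suc l) (FlVar v) w0) \<in> X" by auto
      then show False using cons w0 by blast
    qed
    then obtain d where "w0 = Val d" "d \<in> S" using wd by auto
    then show ?thesis using eA[OF v] w0 by auto
  qed
  have var3: "\<eta>' v = \<eta> v \<and> Pos (FAt (Suc l) (FlVar v) (fvo W M \<eta> (FlVar v))) \<in> X"
    if w: "wr W t v = None" "v \<in> Vprime W" for v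
  proof -
    obtain w0 where w0: "Pos (FAt (Suc l) (FlVar v) w0) \<in> X" using U[of "FlVar v"] w by auto
    have "Pos (FAt l (FlVar v) w0) \<in> X" using Sup[OF w0] w(1) by auto
    then have e: "w0 = fvo W M \<eta> (FlVar v)" using atl by auto
    show ?thesis
    proof (cases "\<eta> v")
      case None then show ?thesis using e w0 eB by auto
    next
      case (Some d) then show ?thesis using e w0 eA[OF w(2)] by auto
    qed
  qed
  have vf: "valid_firing W (M, \<eta>) t (M', \<eta>')"
  proof (rule vf_intro[OF t(1) pre grd])
    show "\<And>p. M' p = (if p \<in> preset W t - postset W t then M p - 1
                    else if p \<in> postset W t - preset W t then M p + 1 else M p)" by (simp add: M'_def)
    show "\<And>v. wr W t v = Some {} \<Longrightarrow> \<eta>' v = None" using var1 by blast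
    show "\<And>v S. wr W t v = Some S \<Longrightarrow> S \<noteq> {} \<Longrightarrow> \<exists>d\<in>S. \<eta>' v = Some d" using var2 by blast
    show "\<And>v. wr W t v = None \<Longrightarrow> \<eta>' v = \<eta> v"
    proof -
      fix v assume "wr W t v = None"
      then show "\<eta>' v = \<eta> v" using var3 eC invs by (cases "v \<in> Vprime W") (auto simp: inv_def)
    qed
  qed
  have new: "Pos (FAt (Suc l) f (fvo W M' \<eta>' f)) \<in> X" if f: "f \<in> flu W" for f
  proof (cases f)
    case FlTrans
    obtain w0 where w0: "Pos (FAt (Suc l) f w0) \<in> X" using U f by blast
    then have "w0 = BTrue" using Sup[OF w0] FlTrans by auto
    then show ?thesis using w0 FlTrans by simp
  next
    case (FlPlace p)
    have p: "p \<in> places W" using f FlPlace by simp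
    consider "p \<in> preset W t - postset W t" | "p \<in> postset W t - preset W t"
      | "p \<notin> preset W t - postset W t" "p \<notin> postset W t - preset W t" by blast
    then show ?thesis
    proof cases
      case 1
      then have "M p > 0" using pre by auto
      then have "M' p = 0" using safeM[of p] 1 by (simp add: M'_def)
      then show ?thesis using fire[OF dyn_pF[OF t(1) 1]] FlPlace by simp
    next
      case 2
      then have "M' p > 0" by (simp add: M'_def)
      then show ?thesis using fire[OF dyn_pT[OF t(1) 2]] FlPlace by simp
    next
      case 3
      obtain w0 where w0: "Pos (FAt (Suc l) f w0) \<in> X" using U f by blast
      have "Pos (FAt l f w0) \<in> X" using Sup[OF w0] FlPlace 3 by auto
      then have "w0 = fvo W M \<eta> f" using atl by auto
      moreover have "M' p = M p" using 3 by (auto simp: M'_def)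
      ultimately show ?thesis using w0 FlPlace by simp
    qed
  next
    case (FlVar v)
    have v: "v \<in> Vprime W" using f FlVar by simp
    show ?thesis
    proof (cases "wr W t v")
      case None then show ?thesis using var3[OF None v] FlVar by simp
    next
      case (Some S)
      show ?thesis
      proof (cases "S = {}")
        case True then show ?thesis using var1[of v] Some FlVar by simp
      next
        case False then show ?thesis using var2[OF Some False] FlVar by auto
      qed
    qed
  qed
  have sig': "sigma (Suc l) X = encS W (M', \<eta>')"
  proof (rule set_eqI)
    fix x :: "('v, 'p) fluent \<times> 'd fval"
    obtain f w where x: "x = (f, w)" by (cases x)
    have "Pos (FAt (Suc l) f w) \<in> X \<longleftrightarrow> f \<in> flu W \<and> w = fvo W M' \<eta>' f"
    proof
      assume "Pos (FAt (Suc l) f w) \<in> X"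
      moreover then have "f \<in> flu W" using dom1 by blast
      ultimately show "f \<in> flu W \<and> w = fvo W M' \<eta>' f" using new U2 by blast
    next
      assume "f \<in> flu W \<and> w = fvo W M' \<eta>' f"
      then show "Pos (FAt (Suc l) f w) \<in> X" using new by blast
    qed
    then show "x \<in> sigma (Suc l) X \<longleftrightarrow> x \<in> encS W (M', \<eta>')"
      by (auto simp: x sigma_def encS_def)
  qed
  have lab: "{a. Pos (AAt l a) \<in> X} = {t}"
  proof (rule set_eqI)
    fix a show "a \<in> {a. Pos (AAt l a) \<in> X} \<longleftrightarrow> a \<in> {t}" using act[of a] t(2) by auto
  qed
  show ?thesis
    by (rule exI[of _ t], rule exI[of _ M'], rule exI[of _ \<eta>']) (intro conjI vf lab sig')
qed

end

context ctx begin

lemma binit_iff: "(f, w) \<in> binit B \<longleftrightarrow> f \<in> flu W \<and> w = fvo W (init_marking W) Map.empty f"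
  using wf unfolding binit_eq
  by (cases f) (auto simp: init_marking_def wf_dawnet_def)

lemma sigma0:
  assumes X: "stable_model (bc_prog B L) X"
  shows "sigma 0 X = encS W (rg_init W)"
proof -
  note cl = stable_closed[OF X]
  have P: "Pos (FAt 0 f (fvo W (init_marking W) Map.empty f)) \<in> X" if f: "f \<in> flu W" for f
  proof -
    have "({Pos (FAt 0 f (fvo W (init_marking W) Map.empty f))}, {}, {}) \<in> bc_prog B L"
      by (rule prog_init) (simp add: binit_iff f)
    from cl[OF this] show ?thesis by auto
  qed
  have Q: "f \<in> flu W \<and> w = fvo W (init_marking W) Map.empty f" if pw: "Pos (FAt 0 f w) \<in> X" for f w
  proof -
    obtain h b n where "(h, b, n) \<in> bc_prog B L" "Pos (FAt 0 f w) \<in> h"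
      using stable_supp[OF X pw] by blast
    then have d: "f \<in> flu W" "w \<in> bdom B f" using head_dom by blast+
    have "w = fvo W (init_marking W) Map.empty f"
    proof (rule ccontr)
      assume ne: "w \<noteq> fvo W (init_marking W) Map.empty f"
      have "fvo W (init_marking W) Map.empty f \<in> bdom B f"
        using binit_dom binit_iff d(1) by blast
      then have "({Neg (FAt 0 f w)}, {Pos (FAt 0 f (fvo W (init_marking W) Map.empty f))}, {}) \<in> bc_prog B L"
        by (intro prog_neg) (use d ne in \<open>auto simp: bc_simps\<close>)
      from cl[OF this] P[OF d(1)] have "Neg (FAt 0 f w) \<in> X" by auto
      then show False using stable_cons[OF X pw] by blast
    qed
    then show ?thesis using d by blast
  qed
  show ?thesis
  proof (rule set_eqI)
    fix x :: "('v, 'p) fluent \<times> 'd fval"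
    obtain f w where x: "x = (f, w)" by (cases x)
    have "Pos (FAt 0 f w) \<in> X \<longleftrightarrow> f \<in> flu W \<and> w = fvo W (init_marking W) Map.empty f"
      using P Q by blast
    then show "x \<in> sigma 0 X \<longleftrightarrow> x \<in> encS W (rg_init W)"
      by (auto simp: x sigma_def encS_def rg_init_def)
  qed
qed

end

context ctx begin

definition hist :: "(nat \<Rightarrow> ('v, 'd, 'p) dstate) \<Rightarrow> (nat \<Rightarrow> 't) \<Rightarrow> nat \<Rightarrow> (('v, 'p) fluent, 'd fval, 't) patom lit set" where
  "hist ss ts n = {x. case x of
      Pos y \<Rightarrow> (case y of FAt i f w \<Rightarrow> i \<le> n \<and> f \<in> flu W \<and> w = fvo W (fst (ss i)) (snd (ss i)) f
                       | AAt i a \<Rightarrow> i < n \<and> a = ts i)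
    | Neg y \<Rightarrow> (case y of FAt i f w \<Rightarrow> i \<le> n \<and> f \<in> flu W \<and> w \<in> bdom B f \<and> w \<noteq> fvo W (fst (ss i)) (snd (ss i)) f
                       | AAt i a \<Rightarrow> i < n \<and> a \<in> transs W \<and> a \<noteq> ts i)}"

lemma hist_simps[simp]:
  "Pos (FAt i f w) \<in> hist ss ts n \<longleftrightarrow> i \<le> n \<and> f \<in> flu W \<and> w = fvo W (fst (ss i)) (snd (ss i)) f"
  "Neg (FAt i f w) \<in> hist ss ts n \<longleftrightarrow> i \<le> n \<and> f \<in> flu W \<and> w \<in> bdom B f \<and> w \<noteq> fvo W (fst (ss i)) (snd (ss i)) f"
  "Pos (AAt i a) \<in> hist ss ts n \<longleftrightarrow> i < n \<and> a = ts i"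
  "Neg (AAt i a) \<in> hist ss ts n \<longleftrightarrow> i < n \<and> a \<in> transs W \<and> a \<noteq> ts i"
  by (auto simp: hist_def)

end

locale hctx = ctx W dnf for W :: "('v, 'd, 'p, 't) dawnet" and dnf +
  fixes ss :: "nat \<Rightarrow> ('v, 'd, 'p) dstate" and ts :: "nat \<Rightarrow> 't" and n :: nat
  assumes ss0: "ss 0 = rg_init W"
    and vfs: "\<And>i. i < n \<Longrightarrow> valid_firing W (ss i) (ts i) (ss (Suc i))"
begin

abbreviation "H \<equiv> hist ss ts n"
abbreviation "P \<equiv> bc_prog B n"
abbreviation "fv i f \<equiv> fvo W (fst (ss i)) (snd (ss i)) f"

lemma reach: "i \<le> n \<Longrightarrow> ss i \<in> rg_states W"
proof (induction i)
  case 0 then show ?case using ss0 rg_states.rg_init_in by simp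
next
  case (Suc i)
  then show ?case using rg_states.rg_step[OF _ vfs[of i]] by simp
qed

lemma Fi: "i \<le> n \<Longrightarrow> f \<in> flu W \<Longrightarrow> fv i f \<in> bdom B f"
  using fvo_dom[of "fst (ss i)" "snd (ss i)" f] reach_inv[OF reach[of i]] by simp

lemma stepfacts:
  assumes "i < n"
  obtains M \<eta> M' \<eta>' where "ss i = (M, \<eta>)" "ss (Suc i) = (M', \<eta>')" "valid_firing W (M, \<eta>) (ts i) (M', \<eta>')"
    "(M, \<eta>) \<in> rg_states W" "\<And>p. M p \<le> 1"
proof -
  obtain M \<eta> M' \<eta>' where e: "ss i = (M, \<eta>)" "ss (Suc i) = (M', \<eta>')" by (cases "ss i", cases "ss (Suc i)") auto
  have r: "(M, \<eta>) \<in> rg_states W" using reach[of i] assms e by simp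
  show ?thesis using that[OF e vfs[OF assms, unfolded e] r] reach_safe[OF r] by simp
qed

lemma inH_eq: "i \<le> n \<Longrightarrow> f \<in> flu W \<Longrightarrow> w \<in> bdom B f \<Longrightarrow> Neg (FAt i f w) \<notin> H \<Longrightarrow> w = fv i f"
  by simp

lemma cl:
  assumes r: "(h, b, m) \<in> P" and m: "m \<inter> H = {}" and b: "b \<subseteq> H"
  shows "h \<inter> H \<noteq> {}"
  using r
proof (cases rule: prog_cases)
  case (stat h A C i) then show ?thesis by (simp add: bc_simps)
next
  case (dyn h' A C j)
  obtain M \<eta> M' \<eta>' where e: "ss j = (M, \<eta>)" "ss (Suc j) = (M', \<eta>')"
    by (cases "ss j", cases "ss (Suc j)") auto
  have vf: "valid_firing W (M, \<eta>) (ts j) (M', \<eta>')" using vfs[OF dyn(2)] e by simp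
  have rs: "(M, \<eta>) \<in> rg_states W" using reach[of j] dyn(2) e by simp
  have sf: "\<And>p. M p \<le> 1" using reach_safe[OF rs] by simp
  note D = vf_D[OF vf]
  note V = vf_var[OF vf]
  have jn: "Suc j \<le> n" using dyn(2) by simp
  from dyn(1) show ?thesis
  proof (cases rule: dyn_cases)
    case (inV v w0)
    then have "w0 = fv (Suc j) (FlVar v)" using m dyn(3) jn by (auto simp: neg_at_def bc_simps)
    then show ?thesis using inV dyn(3) jn by auto
  next
    case (inP p w0)
    then have "w0 = fv (Suc j) (FlPlace p)" using m dyn(3) jn by (auto simp: neg_at_def bc_simps)
    then show ?thesis using inP dyn(3) jn by auto
  next
    case (pF p t)
    then have t: "t = ts j" using b dyn(3) by auto
    then have "M p > 0" using D(2) pF by auto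
    then have "M' p = 0" using D(4)[of p] pF t sf[of p] by auto
    then show ?thesis using pF dyn(3) jn e post_places pre_places' by auto
  next
    case (pT p t)
    then have t: "t = ts j" using b dyn(3) by auto
    then have "M' p > 0" using D(4)[of p] pT by auto
    then show ?thesis using pT dyn(3) jn e post_places by auto
  next
    case (wrt v d t S)
    have v: "v \<in> Vprime W" using wr_Vprime[OF wrt(1,2)] .
    have "Val d \<in> bdom B (FlVar v)" using wr_adm[OF wrt(1,2,3)] by (simp add: bc_simps)
    then have "Val d = fv (Suc j) (FlVar v)" using m dyn(3) jn wrt v by (auto simp: neg_at_def)
    then show ?thesis using wrt dyn(3) jn v by auto
  next
    case (nul v t)
    then have t: "t = ts j" using b dyn(3) by auto
    have v: "v \<in> Vprime W" using wr_Vprime[OF nul(1,2)] .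
    have "\<eta>' v = None" using V(1) nul t by simp
    then show ?thesis using nul dyn(3) jn v e by auto
  next
    case (wrc v w0 t S)
    then have t: "t = ts j" using b dyn(3) by auto
    have v: "v \<in> Vprime W" using wr_Vprime[OF wrc(1,2)] .
    obtain d where d: "d \<in> S" "\<eta>' v = Some d" using V(2)[of v S] wrc t by auto
    have "w0 \<in> bdom B (FlVar v)" using wrc(4) by (auto simp: bc_simps)
    moreover have "w0 \<noteq> fv (Suc j) (FlVar v)" using wrc(4) d e by auto
    ultimately have "Neg (FAt (Suc j) (FlVar v) w0) \<in> H" using v jn by simp
    then show ?thesis using m dyn(3) wrc by (auto simp: neg_at_def)
  next
    case (two t s)
    then show ?thesis using b dyn(3) by auto
  next
    case (pre t p)
    have b1: "Pos (AAt j t) \<in> b" "Pos (FAt j (FlPlace p) BFalse) \<in> b" using dyn(3) pre by simp_all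
    have t: "t = ts j" using b1(1) b by auto
    have "Pos (FAt j (FlPlace p) BFalse) \<in> H" using b1(2) b by blast
    then have nM: "\<not> M p > 0" using e by (auto split: if_splits)
    have "p \<in> preset W (ts j)" using pre(2) t by simp
    then have "p \<in> {p. M p > 0}" using D(2) by (rule subsetD[rotated])
    then have False using nM by simp
    then show ?thesis by simp
  next
    case (tr t)
    then show ?thesis using dyn(3) jn by auto
  next
    case (grd t c)
    have bt: "Pos (AAt j t) \<in> b" using dyn(3) grd(5) by simp
    have t: "t = ts j" using bt b by auto
    have dc: "dnf_char (dmodel W) (GNot (gd W t)) (dnf t)" using dnfa grd by auto
    have asg: "assignment (dmodel W) \<eta>" using inv_assignment reach_inv[OF rs] by blast
    have "\<forall>lt \<in> set c. holds (dmodel W) \<eta> (dnf_lit_guard lt)"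
    proof
      fix lt assume lt: "lt \<in> set c"
      have "after_lit j (Inl (dnf_lit_tr lt)) \<in> after_lit j ` ({Inr t} \<union> Inl ` dnf_lit_tr ` set c)"
        using lt by (intro imageI) simp
      then have "after_lit j (Inl (dnf_lit_tr lt)) \<in> H" using dyn(3) grd(5) b by auto
      then show "holds (dmodel W) \<eta> (dnf_lit_guard lt)"
        using e by (cases lt) (auto split: option.splits)
    qed
    then have "holds (dmodel W) \<eta> (GNot (gd W t))" using dc asg grd(3) unfolding dnf_char_def by blast
    then show ?thesis using D(3) t by simp
  qed
next
  case (init f w)
  then show ?thesis using binit_iff ss0 by (auto simp: rg_init_def)
next
  case (fchoice f w)
  then show ?thesis by (cases "w = fv 0 f") (auto simp: bc_simps)
next
  case (achoice a i)
  then show ?thesis by (cases "a = ts i") (auto simp: bc_simps)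
next
  case (uniq f i)
  then have "Pos (FAt i f (fv i f)) \<in> m" using Fi by (auto simp: bc_simps)
  moreover have "Pos (FAt i f (fv i f)) \<in> H" using uniq by (simp add: bc_simps)
  ultimately show ?thesis using m by blast
next
  case (neg f w0 w i)
  then show ?thesis using b by (auto simp: bc_simps)
qed

end

context hctx begin

lemma closed_H: "closed_under (reduct P H) H"
  unfolding closed_under_def
proof (intro ballI impI, clarify)
  fix h b assume r: "(h, b) \<in> reduct P H" "b \<subseteq> H" "h \<inter> H = {}"
  then obtain m where "(h, b, m) \<in> P" "m \<inter> H = {}" unfolding reduct_def by auto
  then show False using cl r(2,3) by blast
qed

lemma cons_H: "consistent H"
  unfolding consistent_def
proof
  assume "\<exists>a. Pos a \<in> H \<and> Neg a \<in> H"
  then obtain a where a: "Pos a \<in> H" "Neg a \<in> H" by blast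
  then show False by (cases a) auto
qed

lemma sigma_H: "i \<le> n \<Longrightarrow> sigma i H = encS W (ss i)"
  by (auto simp: sigma_def encS_def)

lemma act_H: "{a. Pos (AAt i a) \<in> H} = (if i < n then {ts i} else {})"
  by auto

lemma minimal_H:
  assumes Ysub: "Y \<subseteq> H" and Ycl: "closed_under (reduct P H) Y"
  shows "H \<subseteq> Y"
proof -
  have clY: "h \<inter> Y \<noteq> {}" if "(h, b, m) \<in> P" "m \<inter> H = {}" "b \<subseteq> Y" for h b m
  proof -
    have "(h, b) \<in> reduct P H" using that(1,2) unfolding reduct_def by blast
    then show ?thesis using Ycl that(3) unfolding closed_under_def by blast
  qed
  have actY: "Pos (AAt i (ts i)) \<in> Y" if i: "i < n" for i
  proof -
    have tt: "ts i \<in> transs W" using vf_D(1)[of "fst (ss i)" "snd (ss i)" "ts i" "fst (ss (Suc i))" "snd (ss (Suc i))"] vfs[OF i] by simp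
    have "({Pos (AAt i (ts i)), Neg (AAt i (ts i))}, {}, {}) \<in> P"
      by (rule prog_achoice) (use tt i in \<open>simp_all add: bc_simps\<close>)
    from clY[OF this] have "{Pos (AAt i (ts i)), Neg (AAt i (ts i))} \<inter> Y \<noteq> {}" by simp
    moreover have "Neg (AAt i (ts i)) \<notin> Y" using Ysub by auto
    ultimately show ?thesis by blast
  qed
  have supY: "Pos (FAt (Suc i) f w) \<in> Y"
    if "(Some (f, w), A, C) \<in> bdyn B" "i < n" "neg_at (Suc i) C \<inter> H = {}" "after_lit i ` A \<subseteq> Y" for f w A C i
  proof -
    from prog_dyn[OF that(1,2)] have "({Pos (FAt (Suc i) f w)}, after_lit i ` A, neg_at (Suc i) C) \<in> P" by simp
    from clY[OF this that(3,4)] show ?thesis by simp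
  qed
  have posY: "\<forall>f \<in> flu W. Pos (FAt i f (fv i f)) \<in> Y" if "i \<le> n" for i
    using that
  proof (induction i)
    case 0
    show ?case
    proof
      fix f assume f: "f \<in> flu W"
      have "({Pos (FAt 0 f (fv 0 f))}, {}, {}) \<in> P"
        by (rule prog_init) (use f ss0 in \<open>simp add: binit_iff rg_init_def\<close>)
      from clY[OF this] show "Pos (FAt 0 f (fv 0 f)) \<in> Y" by simp
    qed
  next
    case (Suc i)
    then have i: "i < n" by simp
    have IH: "\<forall>f \<in> flu W. Pos (FAt i f (fv i f)) \<in> Y" using Suc by simp
    obtain M \<eta> M' \<eta>' where e: "ss i = (M, \<eta>)" "ss (Suc i) = (M', \<eta>')"
      by (cases "ss i", cases "ss (Suc i)") auto
    have vf: "valid_firing W (M, \<eta>) (ts i) (M', \<eta>')" using vfs[OF i] e by simp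
    have rs: "(M, \<eta>) \<in> rg_states W" using reach[of i] i e by simp
    have sf: "\<And>p. M p \<le> 1" using reach_safe[OF rs] by simp
    note D = vf_D[OF vf]
    note V = vf_var[OF vf]
    define t where "t = ts i"
    have t: "t \<in> transs W" using D(1) by (simp add: t_def)
    have aY: "after_lit i ` {Inr t} \<subseteq> Y" using actY[OF i] by (simp add: t_def)
    show ?case
    proof
      fix f assume f: "f \<in> flu W"
      show "Pos (FAt (Suc i) f (fv (Suc i) f)) \<in> Y"
      proof (cases f)
        case FlTrans
        then show ?thesis using supY[OF dyn_tr[OF t] i _ aY] by (simp add: neg_at_def)
      next
        case (FlPlace p)
        have p: "p \<in> places W" using f FlPlace by simp
        consider "p \<in> preset W t - postset W t" | "p \<in> postset W t - preset W t"
          | "p \<notin> preset W t - postset W t" "p \<notin> postset W t - preset W t" by blast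
        then show ?thesis
        proof cases
          case 1
          then have "M p > 0" using D(2) by (auto simp: t_def)
          then have "M' p = 0" using sf[of p] 1 D(4)[of p] by (simp add: t_def)
          then show ?thesis using supY[OF dyn_pF[OF t 1] i _ aY] FlPlace e by (simp add: neg_at_def)
        next
          case 2
          then have "M' p > 0" using D(4)[of p] by (simp add: t_def)
          then show ?thesis using supY[OF dyn_pT[OF t 2] i _ aY] FlPlace e by (simp add: neg_at_def)
        next
          case 3
          have eqM: "M' p = M p" using 3 D(4)[of p] by (auto simp: t_def)
          define w0 where "w0 = fv i (FlPlace p)"
          have w0: "w0 \<in> {BTrue, BFalse}" by (simp add: w0_def)
          have fs: "fv (Suc i) (FlPlace p) = w0" using eqM e by (simp add: w0_def)
          have "Pos (FAt i (FlPlace p) w0) \<in> Y" using bspec[OF IH, of "FlPlace p"] p unfolding w0_def by simp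
          then have "after_lit i ` {Inl (FlPlace p, w0)} \<subseteq> Y" by simp
          then show ?thesis using supY[OF dyn_inP[OF p w0] i] FlPlace fs by (simp add: neg_at_def)
        qed
      next
        case (FlVar v)
        have v: "v \<in> Vprime W" using f FlVar by simp
        show ?thesis
        proof (cases "wr W t v")
          case None
          have eq: "\<eta>' v = \<eta> v" using V(3) None by (simp add: t_def)
          define w0 where "w0 = fv i (FlVar v)"
          have w0: "w0 \<in> Val ` adm W v \<union> {Null}" using Fi[of i "FlVar v"] i v by (simp add: w0_def bc_simps)
          have fs: "fv (Suc i) (FlVar v) = w0" using eq e by (simp add: w0_def)
          have "Pos (FAt i (FlVar v) w0) \<in> Y" using bspec[OF IH, of "FlVar v"] v unfolding w0_def by simp
          then have "after_lit i ` {Inl (FlVar v, w0)} \<subseteq> Y" by simp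
          then show ?thesis using supY[OF dyn_inV[OF v w0] i] FlVar fs by (simp add: neg_at_def)
        next
          case (Some S)
          show ?thesis
          proof (cases "S = {}")
            case True
            then have "\<eta>' v = None" using V(1) Some by (simp add: t_def)
            then show ?thesis using supY[OF dyn_nul[OF t Some[unfolded True]] i _ aY] FlVar e
              by (simp add: neg_at_def)
          next
            case False
            then obtain d where d: "d \<in> S" "\<eta>' v = Some d" using V(2) Some by (auto simp: t_def)
            show ?thesis using supY[OF dyn_wrt[OF t Some d(1)] i _ aY] FlVar e d v
              by (simp add: neg_at_def)
          qed
        qed
      qed
    qed
  qed
  show "H \<subseteq> Y"
  proof
    fix x assume x: "x \<in> H"
    show "x \<in> Y"
    proof (cases x)
      case (Pos y)
      then show ?thesis
      proof (cases y)
        case (FAt i f w) then show ?thesis using x Pos posY by auto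
      next
        case (AAt i a) then show ?thesis using x Pos actY by auto
      qed
    next
      case (Neg y)
      then show ?thesis
      proof (cases y)
        case (FAt i f w)
        have h: "i \<le> n" "f \<in> flu W" "w \<in> bdom B f" "w \<noteq> fv i f" using x Neg FAt by auto
        have "({Neg (FAt i f w)}, {Pos (FAt i f (fv i f))}, {}) \<in> P"
          by (rule prog_neg) (use h Fi[OF h(1,2)] in \<open>simp_all add: bc_simps\<close>)
        from clY[OF this] posY[OF h(1)] h(2) show ?thesis using Neg FAt by auto
      next
        case (AAt i a)
        have h: "i < n" "a \<in> transs W" "a \<noteq> ts i" using x Neg AAt by auto
        have "({Pos (AAt i a), Neg (AAt i a)}, {}, {}) \<in> P"
          by (rule prog_achoice) (use h in \<open>simp_all add: bc_simps\<close>)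
        from clY[OF this] have "{Pos (AAt i a), Neg (AAt i a)} \<inter> Y \<noteq> {}" by simp
        moreover have "Pos (AAt i a) \<notin> Y" using Ysub h by auto
        ultimately show ?thesis using Neg AAt by blast
      qed
    qed
  qed
qed

lemma stable_H: "stable_model P H"
  unfolding stable_model_def
proof (intro conjI allI impI notI)
  show "consistent H" by (rule cons_H)
  show "closed_under (reduct P H) H" by (rule closed_H)
  fix Y assume "Y \<subset> H" "closed_under (reduct P H) Y"
  then have "H \<subseteq> Y" using minimal_H[of Y] by auto
  then show False using \<open>Y \<subset> H\<close> by auto
qed

end

definition stn :: "'s \<Rightarrow> ('l \<times> 's) list \<Rightarrow> nat \<Rightarrow> 's" where
  "stn s xs i = (if i = 0 then s else snd (xs ! (i - 1)))"

lemma stn_Cons: "stn s (x # xs) (Suc j) = stn (snd x) xs j"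
  by (cases j) (auto simp: stn_def)

lemma stn_0[simp]: "stn s xs 0 = s" by (simp add: stn_def)

lemma lts_run_nth: "lts_run \<delta> s xs \<longleftrightarrow> (\<forall>i<length xs. (stn s xs i, fst (xs ! i), stn s xs (Suc i)) \<in> \<delta>)"
proof (induction xs arbitrary: s)
  case Nil then show ?case by simp
next
  case (Cons x xs)
  obtain l s' where x: "x = (l, s')" by (cases x)
  have "(\<forall>i<length (x # xs). (stn s (x # xs) i, fst ((x # xs) ! i), stn s (x # xs) (Suc i)) \<in> \<delta>)
     \<longleftrightarrow> (s, l, s') \<in> \<delta> \<and> (\<forall>j<length xs. (stn s' xs j, fst (xs ! j), stn s' xs (Suc j)) \<in> \<delta>)"
    unfolding length_Cons All_less_Suc2 by (simp add: stn_Cons x)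
  then show ?case using Cons[of s'] by (simp add: x)
qed

lemma stn_map: "i \<le> length xs \<Longrightarrow> stn (g s) (map (\<lambda>(l, s). (h l, g s)) xs) i = g (stn s xs i)"
  by (cases i) (auto simp: stn_def case_prod_beta)

context ctx begin

lemma hctx_I: "ss 0 = rg_init W \<Longrightarrow> (\<And>i. i < n \<Longrightarrow> valid_firing W (ss i) (ts i) (ss (Suc i))) \<Longrightarrow>
   hctx W dnf ss ts n"
  by (intro hctx.intro ctx_axioms hctx_axioms.intro) auto

lemma back_run:
  "s \<in> rg_states W \<Longrightarrow> lts_run (ts_delta B) (encS W s) ys \<Longrightarrow>
   \<exists>xs. lts_run (rg_delta W) s xs \<and> map (\<lambda>(l, s). ({l}, encS W s)) xs = ys"
proof (induction ys arbitrary: s)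
  case Nil then show ?case by simp
next
  case (Cons y ys)
  obtain L s'' where y: "y = (L, s'')" by (cases y)
  have d: "(encS W s, L, s'') \<in> ts_delta B" and r: "lts_run (ts_delta B) s'' ys"
    using Cons.prems(2) y by auto
  from d obtain l X where lX: "encS W s = sigma l X" "L = {a. Pos (AAt l a) \<in> X}" "s'' = sigma (Suc l) X"
    "stable_model (bc_prog B (Suc l)) X"
    unfolding ts_delta_def by blast
  obtain M \<eta> where s: "s = (M, \<eta>)" by (cases s)
  obtain t M' \<eta>' where st: "valid_firing W (M, \<eta>) t (M', \<eta>')" "{a. Pos (AAt l a) \<in> X} = {t}"
     "sigma (Suc l) X = encS W (M', \<eta>')"
    using step_back[of M \<eta> l X] Cons.prems(1) lX s by auto
  have s': "(M', \<eta>') \<in> rg_states W" using rg_states.rg_step[OF _ st(1)] Cons.prems(1) s by simp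
  obtain xs where xs: "lts_run (rg_delta W) (M', \<eta>') xs" "map (\<lambda>(l, s). ({l}, encS W s)) xs = ys"
    using Cons.IH[OF s'] r lX(3) st(3) by auto
  have "(s, t, (M', \<eta>')) \<in> rg_delta W" using Cons.prems(1) st(1) s by (simp add: rg_delta_def)
  then have r1: "lts_run (rg_delta W) s ((t, (M', \<eta>')) # xs)" using xs(1) by simp
  have r2: "map (\<lambda>(l, s). ({l}, encS W s)) ((t, (M', \<eta>')) # xs) = y # ys"
    using xs(2) y lX st by simp
  show ?case by (rule exI[of _ "(t, (M', \<eta>')) # xs"], rule conjI, rule r1, rule r2)
qed

theorem main_ctx:
  "trace_equivalent {rg_init W} (rg_states W) (transs W) (rg_delta W) (ts_init B) (ts_delta B)"
  unfolding trace_equivalent_def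
proof (rule exI[of _ "encS W"], rule exI[of _ "\<lambda>t. {t}"], intro conjI allI impI)
  show "inj_on (encS W) (rg_states W)" by (rule encS_inj)
  show "inj_on (\<lambda>t. {t}) (transs W)" by (rule inj_onI) simp
next
  fix s0 xs assume p: "lts_path {rg_init W} (rg_delta W) s0 xs"
  then have s0: "s0 = rg_init W" and run: "lts_run (rg_delta W) s0 xs" by (auto simp: lts_path_def)
  define ss where "ss = stn s0 xs"
  define tts where "tts = (\<lambda>i. fst (xs ! i))"
  define N where "N = length xs"
  have R: "\<And>i. i < N \<Longrightarrow> (ss i, tts i, ss (Suc i)) \<in> rg_delta W"
    using run unfolding lts_run_nth ss_def tts_def N_def by blast
  have ss0: "ss 0 = rg_init W" using s0 by (simp add: ss_def)
  have H: "hctx W dnf ss tts k" if "k \<le> N" for k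
    by (rule hctx_I[where ss=ss and ts=tts and n=k]) (use ss0 R that in \<open>auto simp: rg_delta_def\<close>)
  have TS: "encS W (ss k) \<in> ts_states B" if "k \<le> N" for k
    using that
  proof (induction k)
    case 0
    have "stable_model (bc_prog B 0) (hist ss tts 0)" using hctx.stable_H[OF H[of 0]] by simp
    from ts_states.ts_init_in[OF this] show ?case using hctx.sigma_H[OF H[of 0], of 0] by simp
  next
    case (Suc k)
    have "stable_model (bc_prog B (Suc k)) (hist ss tts (Suc k))" using hctx.stable_H[OF H[OF Suc.prems]] .
    moreover have "sigma k (hist ss tts (Suc k)) \<in> ts_states B"
      using Suc hctx.sigma_H[OF H[OF Suc.prems], of k] by simp
    ultimately have "sigma (Suc k) (hist ss tts (Suc k)) \<in> ts_states B" by (rule ts_states.ts_step)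
    then show ?case using hctx.sigma_H[OF H[OF Suc.prems], of "Suc k"] by simp
  qed
  have step: "(encS W (ss k), {tts k}, encS W (ss (Suc k))) \<in> ts_delta B" if k: "k < N" for k
  proof -
    have h: "hctx W dnf ss tts (Suc k)" using H k by simp
    have e1: "sigma k (hist ss tts (Suc k)) = encS W (ss k)" using hctx.sigma_H[OF h, of k] by simp
    have e2: "sigma (Suc k) (hist ss tts (Suc k)) = encS W (ss (Suc k))" using hctx.sigma_H[OF h, of "Suc k"] by simp
    have e3: "{a. Pos (AAt k a) \<in> hist ss tts (Suc k)} = {tts k}" using hctx.act_H[OF h, of k] by simp
    have st: "stable_model (bc_prog B (Suc k)) (hist ss tts (Suc k))" using hctx.stable_H[OF h] .
    have tk: "encS W (ss k) \<in> ts_states B" using TS k by simp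
    show ?thesis unfolding ts_delta_def mem_Collect_eq
      by (rule exI[of _ k], rule exI[of _ "hist ss tts (Suc k)"]) (simp add: e1 e2 e3 st tk)
  qed
  have init: "encS W s0 \<in> ts_init B"
  proof -
    have "stable_model (bc_prog B 0) (hist ss tts 0)" using hctx.stable_H[OF H[of 0]] by simp
    moreover have "sigma 0 (hist ss tts 0) = encS W s0" using hctx.sigma_H[OF H[of 0], of 0] by (simp add: ss_def)
    ultimately show ?thesis unfolding ts_init_def by blast
  qed
  have "lts_run (ts_delta B) (encS W s0) (map (\<lambda>(l, s). ({l}, encS W s)) xs)"
    unfolding lts_run_nth
  proof (intro allI impI)
    fix i assume i: "i < length (map (\<lambda>(l, s). ({l}, encS W s)) xs)"
    then have i': "i < N" by (simp add: N_def)
    have a: "stn (encS W s0) (map (\<lambda>(l, s). ({l}, encS W s)) xs) i = encS W (ss i)"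
      using stn_map[of i xs "encS W" s0 "\<lambda>l. {l}"] i' by (simp add: ss_def N_def)
    have b: "stn (encS W s0) (map (\<lambda>(l, s). ({l}, encS W s)) xs) (Suc i) = encS W (ss (Suc i))"
      using stn_map[of "Suc i" xs "encS W" s0 "\<lambda>l. {l}"] i' by (simp add: ss_def N_def)
    have c: "fst (map (\<lambda>(l, s). ({l}, encS W s)) xs ! i) = {tts i}"
      using i' by (simp add: tts_def N_def case_prod_beta)
    show "(stn (encS W s0) (map (\<lambda>(l, s). ({l}, encS W s)) xs) i,
           fst (map (\<lambda>(l, s). ({l}, encS W s)) xs ! i),
           stn (encS W s0) (map (\<lambda>(l, s). ({l}, encS W s)) xs) (Suc i)) \<in> ts_delta B"
      unfolding a b c using step[OF i'] .
  qed
  then show "lts_path (ts_init B) (ts_delta B) (encS W s0) (map (\<lambda>(l, s). ({l}, encS W s)) xs)"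
    using init by (simp add: lts_path_def)
next
  fix s0' ys assume p: "lts_path (ts_init B) (ts_delta B) s0' ys"
  then obtain X where X: "stable_model (bc_prog B 0) X" "s0' = sigma 0 X" and run: "lts_run (ts_delta B) s0' ys"
    unfolding lts_path_def ts_init_def by blast
  have e: "s0' = encS W (rg_init W)" using sigma0[OF X(1)] X(2) by simp
  obtain xs where xs: "lts_run (rg_delta W) (rg_init W) xs" "map (\<lambda>(l, s). ({l}, encS W s)) xs = ys"
    using back_run[OF rg_states.rg_init_in] run e by blast
  show "\<exists>s0 xs. lts_path {rg_init W} (rg_delta W) s0 xs \<and> encS W s0 = s0' \<and>
                     map (\<lambda>(l, s). ({l}, encS W s)) xs = ys"
    using xs e by (auto simp: lts_path_def)
qed

end

theorem mainTheorem1: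
  fixes W :: "('v, 'd, 'p, 't) dawnet"
    and dnf :: "'t \<Rightarrow> ('v, 'd) dnf_lit list list"
  assumes "wf_dawnet W"
    and "one_safe W"
    and "\<forall>t \<in> transs W. \<not> guard_valid (dmodel W) (gd W t) \<longrightarrow>
            dnf_char (dmodel W) (GNot (gd W t)) (dnf t) \<and>
            (\<forall>c \<in> set (dnf t). \<forall>l \<in> set c. dnf_lit_var l \<in> Vprime W)"
  shows "trace_equivalent {rg_init W} (rg_states W) (transs W) (rg_delta W)
           (ts_init (bc_enc W dnf)) (ts_delta (bc_enc W dnf))"
proof -
  interpret ctx W dnf using assms by (rule ctx.intro)
  show ?thesis by (rule main_ctx)
qed


end
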